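(* Let $d\ge3$ be odd, and define $\hat B=\frac{1}{\sqrt{d+1}}\sum_{\mathbf q\in(\mathbb Z_d^2)^*}\hat D_{\mathbf q}$ and $\hat U=\frac1d(1+\sqrt{d+1}\,\hat B)=\frac1d\sum_{\mathbf q\in\mathbb Z_d^2}\hat D_{\mathbf q}$. Then $\hat U$ is Hermitian, $\hat U^2=1$, $\operatorname{Tr}\hat U=1$, and $\hat U$ has eigenvalue $+1$ with multiplicity $(d+1)/2$ and eigenvalue $-1$ with multiplicity $(d-1)/2$; moreover $\hat U|r\rangle=|{-r}\bmod d\rangle$ for all $r$. Consequently the smallest eigenvalue of $\hat B$ is $-\sqrt{d+1}$, and the $d^2$ operators $$\hat E_{\mathbf p}=\frac{1}{d^2}\Big(1+\frac{1}{\sqrt{d+1}}\hat D_{\mathbf p}\hat B\hat D_{\mathbf p}^\dagger\Big),\qquad \mathbf p\in\mathbb Z_d^2,$$ form a symmetric informationally complete POVM in which every element has rank $(d+1)/2$, with efficiency parameter $1/\sqrt{d+1}$.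
   Context: Weyl–Heisenberg notation: orthonormal basis $|0\rangle,\dots,|d-1\rangle$ of $\mathbb C^d$, $\tau=-e^{\pi i/d}$, $\hat T|r\rangle=\tau^{2r}|r\rangle$, $\hat S|r\rangle=|r+1\bmod d\rangle$, $\hat D_{\mathbf p}=\tau^{p_1p_2}\hat S^{p_1}\hat T^{p_2}$ for $\mathbf p=(p_1,p_2)\in\mathbb Z^2$; $\mathbb Z_d^2=\{0,\dots,d-1\}^2$, $(\mathbb Z_d^2)^*=\mathbb Z_d^2\setminus\{(0,0)\}$. A POVM is symmetric if $\operatorname{Tr}(\hat E_r\hat E_s)=\alpha+\beta\delta_{rs}$ for constants $\alpha,\beta$, and informationally complete if the probabilities $\operatorname{Tr}(\hat\rho\hat E_r)$ determine every density matrix $\hat\rho$. For such a POVM written as $\hat E_r=\frac{1}{d^2}(1+\hat B'_r)$ with $\hat B'_r$ trace-zero Hermitian, the efficiency parameter is $\kappa=\|\hat B'_r\|$, where $\|\hat B\|^2=\frac{1}{d(d-1)}\operatorname{Tr}(\hat B^2)$. *)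

theory Defs
  imports Complex_Main "Jordan_Normal_Form.Schur_Decomposition"
    "Jordan_Normal_Form.DL_Rank"
begin

definition mtrace :: "complex mat \<Rightarrow> complex" where
  "mtrace A = (\<Sum>i<dim_row A. A $$ (i,i))"

definition tau :: "nat \<Rightarrow> complex" where
  "tau d = - cis (pi / real d)"

definition shiftS :: "nat \<Rightarrow> complex mat" where
  "shiftS d = mat d d (\<lambda>(i,j). if i = (j + 1) mod d then 1 else 0)"

definition clockT :: "nat \<Rightarrow> complex mat" where
  "clockT d = mat d d (\<lambda>(i,j). if i = j then tau d ^ (2 * i) else 0)"

definition dispD :: "nat \<Rightarrow> nat \<times> nat \<Rightarrow> complex mat" where
  "dispD d p = (tau d ^ (fst p * snd p)) \<cdot>\<^sub>m ((shiftS d ^\<^sub>m fst p) * (clockT d ^\<^sub>m snd p))"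

definition Zd2 :: "nat \<Rightarrow> (nat \<times> nat) set" where
  "Zd2 d = {0..<d} \<times> {0..<d}"

definition Zd2star :: "nat \<Rightarrow> (nat \<times> nat) set" where
  "Zd2star d = Zd2 d - {(0,0)}"

definition msum :: "nat \<Rightarrow> ('i \<Rightarrow> complex mat) \<Rightarrow> 'i set \<Rightarrow> complex mat" where
  "msum n f S = mat n n (\<lambda>(i,j). \<Sum>x\<in>S. f x $$ (i,j))"

definition opB :: "nat \<Rightarrow> complex mat" where
  "opB d = (complex_of_real (1 / sqrt (real d + 1))) \<cdot>\<^sub>m msum d (dispD d) (Zd2star d)"

definition opU :: "nat \<Rightarrow> complex mat" where
  "opU d = (complex_of_real (1 / real d)) \<cdot>\<^sub>m msum d (dispD d) (Zd2 d)"

definition povmE :: "nat \<Rightarrow> nat \<times> nat \<Rightarrow> complex mat" where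
  "povmE d p = (complex_of_real (1 / (real d)^2)) \<cdot>\<^sub>m
     (1\<^sub>m d + (complex_of_real (1 / sqrt (real d + 1))) \<cdot>\<^sub>m
        (dispD d p * opB d * mat_adjoint (dispD d p)))"

definition hermitian :: "complex mat \<Rightarrow> bool" where
  "hermitian A \<longleftrightarrow> mat_adjoint A = A"

definition psd :: "nat \<Rightarrow> complex mat \<Rightarrow> bool" where
  "psd n A \<longleftrightarrow> A \<in> carrier_mat n n \<and> hermitian A \<and>
     (\<forall>v \<in> carrier_vec n. 0 \<le> Re (\<Sum>i<n. cnj (v $ i) * (A *\<^sub>v v) $ i))"

definition density :: "nat \<Rightarrow> complex mat \<Rightarrow> bool" where
  "density n \<rho> \<longleftrightarrow> psd n \<rho> \<and> mtrace \<rho> = 1"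

definition is_POVM :: "nat \<Rightarrow> ('i \<Rightarrow> complex mat) \<Rightarrow> 'i set \<Rightarrow> bool" where
  "is_POVM n E I \<longleftrightarrow> finite I \<and> (\<forall>r\<in>I. psd n (E r)) \<and> msum n E I = 1\<^sub>m n"

definition symmetric_POVM :: "nat \<Rightarrow> ('i \<Rightarrow> complex mat) \<Rightarrow> 'i set \<Rightarrow> bool" where
  "symmetric_POVM n E I \<longleftrightarrow> is_POVM n E I \<and>
     (\<exists>\<alpha> \<beta> :: real. \<forall>r\<in>I. \<forall>s\<in>I.
        mtrace (E r * E s) = complex_of_real (\<alpha> + (if r = s then \<beta> else 0)))"

definition info_complete :: "nat \<Rightarrow> ('i \<Rightarrow> complex mat) \<Rightarrow> 'i set \<Rightarrow> bool" where
  "info_complete n E I \<longleftrightarrow>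
     (\<forall>\<rho> \<sigma>. density n \<rho> \<longrightarrow> density n \<sigma> \<longrightarrow>
        (\<forall>r\<in>I. mtrace (\<rho> * E r) = mtrace (\<sigma> * E r)) \<longrightarrow> \<rho> = \<sigma>)"

definition hs_norm :: "nat \<Rightarrow> complex mat \<Rightarrow> real" where
  "hs_norm n B = sqrt (Re (mtrace (B * B)) / (real n * (real n - 1)))"

definition mat_rank :: "nat \<Rightarrow> complex mat \<Rightarrow> nat" where
  "mat_rank n A = vec_space.rank n A"

end

theory Submission
  imports Defs
begin


locale wh = fixes d :: nat assumes odd_d: "odd d" and d3: "d \<ge> 3"
begin

definition w :: "int \<Rightarrow> complex" where "w k = cis (2 * pi * of_int k / real d)"
definition m :: int where "m = (int d + 1) div 2"

lemma d_pos: "d > 0" using d3 by simp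
lemma two_m: "2 * m = int d + 1" unfolding m_def using odd_d by (auto elim!: oddE)

lemma w_add: "w (k + l) = w k * w l"
  unfolding w_def cis_mult by (simp add: add_divide_distrib distrib_left)
lemma w_0[simp]: "w 0 = 1" unfolding w_def by simp
lemma w_cnj: "cnj (w k) = w (- k)" unfolding w_def cis_cnj by simp
lemma w_pow: "w k ^ n = w (k * int n)"
  unfolding w_def DeMoivre by (simp add: algebra_simps)
lemma w_d: "w (int d * k) = 1"
proof -
  have "2 * pi * of_int (int d * k) / real d = 2 * pi * of_int k" using d_pos by simp
  then show ?thesis unfolding w_def by (simp add: cis_multiple_2pi)
qed
lemma w_mod: "w (k mod int d) = w k"
proof -
  have "k = k mod int d + int d * (k div int d)" by simp
  then have "w k = w (k mod int d) * w (int d * (k div int d))" by (metis w_add)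
  then show ?thesis by (simp add: w_d)
qed
lemma w_cong: "k mod int d = l mod int d \<Longrightarrow> w k = w l" by (metis w_mod)
lemma w_eq_1: assumes "w k = 1" shows "int d dvd k"
proof -
  from assms have "cos (2 * pi * of_int k / real d) = 1" unfolding w_def
    by (metis cis.sel(1) one_complex.sel(1))
  then obtain n :: int where n: "2 * pi * of_int k / real d = of_int n * (2 * pi)"
    by (auto simp: cos_one_2pi_int)
  then have "of_int k = real_of_int n * real d" using d_pos by (simp add: field_simps)
  then have "k = n * int d" by (metis of_int_eq_iff of_int_mult of_int_of_nat_eq)
  then show ?thesis by simp
qed
lemma w_sum: "(\<Sum>j<d. w (c * int j)) = (if int d dvd c then of_nat d else 0)"
proof (cases "int d dvd c")
  case True
  then obtain k where "c = int d * k" by auto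
  then have "\<And>j. w (c * int j) = 1" by (metis mult.assoc w_d)
  then show ?thesis using True by simp
next
  case False
  have e: "w (c * int j) = w c ^ j" for j by (simp add: w_pow)
  have ne: "w c \<noteq> 1" using False w_eq_1 by blast
  have "w c ^ d = 1" using w_d[of c] by (simp add: w_pow mult.commute)
  then have "(\<Sum>j<d. w c ^ j) = 0" using ne by (simp add: sum_gp_strict)
  then show ?thesis using False e by simp
qed

lemma tau_eq: "tau d = w m"
proof -
  have "2 * pi * of_int m / real d = pi / real d + pi"
  proof -
    have "2 * of_int m = real d + 1" using two_m by (metis of_int_mult of_int_numeral of_int_of_nat_eq of_int_add of_int_1)
    then have "2 * pi * of_int m = pi * (real d + 1)" by (metis mult.assoc mult.commute)
    then show ?thesis using d_pos by (simp add: field_simps)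
  qed
  then show ?thesis unfolding tau_def w_def minus_cis by simp
qed
lemma tau_pow: "tau d ^ n = w (m * int n)" by (simp add: tau_eq w_pow)

end


context wh begin

lemma mod_lt2: "x < 2 * d \<Longrightarrow> x mod d = (if x < d then x else x - d)"
  by (simp add: mod_if le_mod_geq)

lemma shift_iff: assumes "i < d" "k < d" "a < d"
  shows "i = (k + a) mod d \<longleftrightarrow> k = (i + d - a) mod d"
  using assms by (simp add: mod_lt2) arith

lemma sum_shift: assumes "i < d" "a < d"
  shows "(\<Sum>k<d. if i = (k + a) mod d then f k else 0) = f ((i + d - a) mod d)"
proof -
  have "(\<Sum>k<d. if i = (k + a) mod d then f k else 0) = (\<Sum>k<d. if k = (i + d - a) mod d then f k else 0)"
    by (rule sum.cong, insert assms, auto simp: shift_iff)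
  also have "\<dots> = f ((i + d - a) mod d)" using d_pos by (simp add: sum.delta)
  finally show ?thesis .
qed

lemma shiftS_carrier[simp]: "shiftS d \<in> carrier_mat d d" unfolding shiftS_def by simp
lemma shiftS_dim[simp]: "dim_row (shiftS d) = d" "dim_col (shiftS d) = d" unfolding shiftS_def by simp_all
lemma clockT_dim[simp]: "dim_row (clockT d) = d" "dim_col (clockT d) = d" unfolding clockT_def by simp_all
lemma clockT_carrier[simp]: "clockT d \<in> carrier_mat d d" unfolding clockT_def by simp

lemma shiftS_pow: assumes "i < d" "j < d"
  shows "(shiftS d ^\<^sub>m a) $$ (i,j) = (if i = (j + a) mod d then 1 else 0)"
  using assms
proof (induction a arbitrary: i j)
  case 0
  then show ?case by simp
next
  case (Suc a)
  have "(shiftS d ^\<^sub>m Suc a) $$ (i,j) = (\<Sum>k<d. (shiftS d ^\<^sub>m a) $$ (i,k) * shiftS d $$ (k,j))"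
    using Suc.prems by (simp add: times_mat_def scalar_prod_def row_def col_def lessThan_atLeast0)
  also have "\<dots> = (\<Sum>k<d. (if i = (k + a) mod d then 1 else 0) * (if k = (j + 1) mod d then 1 else 0))"
    using Suc by (intro sum.cong) (auto simp: shiftS_def)
  also have "\<dots> = (\<Sum>k<d. if k = (j + 1) mod d then (if i = (k + a) mod d then 1 else 0) else 0)"
    by (intro sum.cong) auto
  also have "\<dots> = (if i = ((j + 1) mod d + a) mod d then 1 else 0)"
    using d_pos by (simp add: sum.delta)
  also have "((j + 1) mod d + a) mod d = (j + Suc a) mod d" by (simp add: mod_add_left_eq)
  finally show ?case .
qed

lemma clockT_pow: assumes "i < d" "j < d"
  shows "(clockT d ^\<^sub>m b) $$ (i,j) = (if i = j then tau d ^ (2 * i * b) else 0)"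
  using assms
proof (induction b arbitrary: i j)
  case 0
  then show ?case by simp
next
  case (Suc b)
  have "(clockT d ^\<^sub>m Suc b) $$ (i,j) = (\<Sum>k<d. (clockT d ^\<^sub>m b) $$ (i,k) * clockT d $$ (k,j))"
    using Suc.prems by (simp add: times_mat_def scalar_prod_def row_def col_def lessThan_atLeast0)
  also have "\<dots> = (\<Sum>k<d. if k = j then (if i = k then tau d ^ (2 * i * b) else 0) * tau d ^ (2 * k) else 0)"
    using Suc by (intro sum.cong) (auto simp: clockT_def)
  also have "\<dots> = (if i = j then tau d ^ (2 * i * b) else 0) * tau d ^ (2 * j)"
    using Suc.prems by (simp add: sum.delta)
  also have "\<dots> = (if i = j then tau d ^ (2 * i * Suc b) else 0)"
    by (auto simp: power_add[symmetric] algebra_simps)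
  finally show ?case .
qed

lemma pow_carrier: "A \<in> carrier_mat d d \<Longrightarrow> A ^\<^sub>m n \<in> carrier_mat d d" by simp

lemma dispD_carrier[simp]: "dispD d p \<in> carrier_mat d d"
proof -
  have "shiftS d ^\<^sub>m fst p \<in> carrier_mat d d" "clockT d ^\<^sub>m snd p \<in> carrier_mat d d"
    by (simp_all add: pow_carrier)
  then show ?thesis unfolding dispD_def by auto
qed
lemma dispD_dim[simp]: "dim_row (dispD d p) = d" "dim_col (dispD d p) = d"
  by (simp_all add: carrier_matD[OF dispD_carrier])

lemma w_2m: "w (m * int (2 * j * b)) = w (int b * int j)"
proof -
  have "m * int (2 * j * b) = int b * int j + int d * (int j * int b)"
  proof -
    have "m * int (2 * j * b) = (2 * m) * (int j * int b)" by (simp add: algebra_simps)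
    also have "\<dots> = (int d + 1) * (int j * int b)" by (simp only: two_m)
    finally show ?thesis by (simp add: algebra_simps)
  qed
  then show ?thesis by (simp only: w_add w_d mult_1_right)
qed

lemma dispD_entry: assumes "a < d" "i < d" "j < d"
  shows "dispD d (a,b) $$ (i,j) = (if i = (j + a) mod d then w (m * int (a * b) + int b * int j) else 0)"
proof -
  have "dispD d (a,b) $$ (i,j) = tau d ^ (a * b) * (\<Sum>k<d. (shiftS d ^\<^sub>m a) $$ (i,k) * (clockT d ^\<^sub>m b) $$ (k,j))"
    using assms unfolding dispD_def
    by (simp add: times_mat_def scalar_prod_def row_def col_def lessThan_atLeast0)
  also have "(\<Sum>k<d. (shiftS d ^\<^sub>m a) $$ (i,k) * (clockT d ^\<^sub>m b) $$ (k,j))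
     = (\<Sum>k<d. if k = j then (if i = (k + a) mod d then 1 else 0) * tau d ^ (2 * k * b) else 0)"
    using assms by (intro sum.cong) (auto simp: shiftS_pow clockT_pow)
  also have "\<dots> = (if i = (j + a) mod d then tau d ^ (2 * j * b) else 0)"
    using assms by (simp add: sum.delta)
  also have "tau d ^ (a * b) * (if i = (j + a) mod d then tau d ^ (2 * j * b) else 0)
     = (if i = (j + a) mod d then w (m * int (a * b) + int b * int j) else 0)"
    by (simp only: tau_pow w_2m w_add mult_zero_right if_distrib) simp
  finally show ?thesis .
qed

end


lemma adjoint_entry: "i < dim_col A \<Longrightarrow> j < dim_row A \<Longrightarrow> mat_adjoint A $$ (i,j) = cnj (A $$ (j,i))"
  unfolding mat_adjoint_def by (simp add: mat_of_rows_index)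
lemma adjoint_dim[simp]: "dim_row (mat_adjoint A) = dim_col A" "dim_col (mat_adjoint A) = dim_row A"
  unfolding mat_adjoint_def by simp_all

lemma msum_entry: "i < n \<Longrightarrow> j < n \<Longrightarrow> msum n f S $$ (i,j) = (\<Sum>x\<in>S. f x $$ (i,j))"
  unfolding msum_def by simp
lemma msum_dim[simp]: "dim_row (msum n f S) = n" "dim_col (msum n f S) = n" unfolding msum_def by simp_all

lemma mult_entry: "A \<in> carrier_mat n k \<Longrightarrow> B \<in> carrier_mat k l \<Longrightarrow> i < n \<Longrightarrow> j < l \<Longrightarrow>
   (A * B) $$ (i,j) = (\<Sum>t<k. A $$ (i,t) * B $$ (t,j))"
  by (simp add: times_mat_def scalar_prod_def row_def col_def lessThan_atLeast0)

context wh begin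

lemma w_natmod: "w (c * (int (x mod d) - int (y mod d))) = w (c * (int x - int y))"
proof -
  have "int (x mod d) + int d * int (x div d) = int x"
    by (metis of_nat_add of_nat_mult mod_mult_div_eq)
  moreover have "int (y mod d) + int d * int (y div d) = int y"
    by (metis of_nat_add of_nat_mult mod_mult_div_eq)
  ultimately have ex: "int (x mod d) = int x - int d * int (x div d)" "int (y mod d) = int y - int d * int (y div d)"
    by linarith+
  have "c * (int (x mod d) - int (y mod d)) = c * (int x - int y) + int d * (c * (int (y div d) - int (x div d)))"
    unfolding ex by (simp add: algebra_simps)
  then show ?thesis by (simp add: w_add w_d)
qed

definition s :: "nat \<Rightarrow> nat \<Rightarrow> nat" where "s a i = (i + d - a) mod d"

lemma s_lt: "s a i < d" unfolding s_def using d_pos by simp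

lemma conj_entry:
  assumes X: "X \<in> carrier_mat d d" and a: "a < d" and i: "i < d" and j: "j < d"
  shows "(dispD d (a,b) * X * mat_adjoint (dispD d (a,b))) $$ (i,j)
       = X $$ (s a i, s a j) * w (int b * (int i - int j))"
proof -
  let ?D = "dispD d (a,b)"
  have DX: "(?D * X) $$ (i,l) = w (m * int (a * b) + int b * int (s a i)) * X $$ (s a i, l)" if i: "i < d" and l: "l < d" for i l
  proof -
    have "(?D * X) $$ (i,l) = (\<Sum>k<d. ?D $$ (i,k) * X $$ (k,l))"
      using X i l by (intro mult_entry) auto
    also have "\<dots> = (\<Sum>k<d. if i = (k + a) mod d then w (m * int (a * b) + int b * int k) * X $$ (k,l) else 0)"
      using a i by (intro sum.cong) (auto simp: dispD_entry)
    also have "\<dots> = w (m * int (a * b) + int b * int (s a i)) * X $$ (s a i, l)"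
      using a i by (simp add: sum_shift s_def)
    finally show ?thesis .
  qed
  have DXc: "?D * X \<in> carrier_mat d d" using mult_carrier_mat[OF dispD_carrier X] .
  have "(?D * X * mat_adjoint ?D) $$ (i,j) = (\<Sum>l<d. (?D * X) $$ (i,l) * mat_adjoint ?D $$ (l,j))"
    using DXc i j by (intro mult_entry) auto
  also have "\<dots> = (\<Sum>l<d. if j = (l + a) mod d then (?D * X) $$ (i,l) * cnj (w (m * int (a * b) + int b * int l)) else 0)"
    using a j by (intro sum.cong) (auto simp: adjoint_entry dispD_entry)
  also have "\<dots> = (?D * X) $$ (i, s a j) * cnj (w (m * int (a * b) + int b * int (s a j)))"
    using a j by (simp add: sum_shift s_def)
  also have "\<dots> = X $$ (s a i, s a j) * (w (m * int (a * b) + int b * int (s a i)) * w (- (m * int (a * b) + int b * int (s a j))))"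
    using DX[OF i s_lt] by (simp add: w_cnj)
  also have "w (m * int (a * b) + int b * int (s a i)) * w (- (m * int (a * b) + int b * int (s a j))) = w (int b * (int (s a i) - int (s a j)))"
    by (simp add: w_add[symmetric] algebra_simps)
  also have "\<dots> = w (int b * (int (i + d - a) - int (j + d - a)))" unfolding s_def by (rule w_natmod)
  also have "int (i + d - a) - int (j + d - a) = int i - int j" using a by simp
  finally show ?thesis .
qed


lemma dvd2: "int d dvd 2 * x \<longleftrightarrow> int d dvd x"
proof -
  have "coprime (int d) 2" using odd_d by (simp add: coprime_right_2_iff_odd)
  then show ?thesis by (simp add: coprime_dvd_mult_right_iff)
qed

lemma nmod_eq: "(x mod d = y mod d) \<longleftrightarrow> int d dvd (int x - int y)"
proof -
  have "(x mod d = y mod d) \<longleftrightarrow> int (x mod d) = int (y mod d)" by simp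
  also have "\<dots> \<longleftrightarrow> int x mod int d = int y mod int d" by (simp add: zmod_int)
  also have "\<dots> \<longleftrightarrow> int d dvd (int x - int y)" by (rule mod_eq_dvd_iff)
  finally show ?thesis .
qed

lemma dvd_shift: "int d dvd (x + int d * k) \<longleftrightarrow> int d dvd x"
  by (metis dvd_add_left_iff dvd_triv_left add.commute)

definition sg :: "nat \<Rightarrow> nat \<Rightarrow> nat" where "sg a i = (2 * a + d - i) mod d"
lemma sg_lt: "sg a i < d" unfolding sg_def using d_pos by simp

lemma cnd_iff: assumes "i < d" "j < d"
  shows "(i + j) mod d = (2 * a) mod d \<longleftrightarrow> j = sg a i"
proof -
  have "(i + j) mod d = (2 * a) mod d \<longleftrightarrow> int d dvd (int (i + j) - int (2 * a))" by (rule nmod_eq)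
  also have "\<dots> \<longleftrightarrow> int d dvd (int j - int (2 * a + d - i) + int d * 1)"
    using assms by (simp add: algebra_simps of_nat_diff)
  also have "\<dots> \<longleftrightarrow> j mod d = (2 * a + d - i) mod d" by (simp only: dvd_shift nmod_eq)
  also have "\<dots> \<longleftrightarrow> j = sg a i" using assms by (simp add: sg_def)
  finally show ?thesis .
qed

lemma sum_cnd: assumes "i < d"
  shows "(\<Sum>j<d. if (i + j) mod d = (2 * a) mod d then f j else 0) = f (sg a i)"
proof -
  have "(\<Sum>j<d. if (i + j) mod d = (2 * a) mod d then f j else 0) = (\<Sum>j<d. if j = sg a i then f j else 0)"
    using assms by (intro sum.cong) (auto simp: cnd_iff)
  then show ?thesis using sg_lt[of a i] by (simp add: sum.delta)
qed

lemma sum_cnd': assumes "j < d"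
  shows "(\<Sum>i<d. if (i + j) mod d = (2 * a) mod d then f i else 0) = f (sg a j)"
  using sum_cnd[OF assms, of a f] by (simp add: add.commute)

lemma Zd2_sum: "(\<Sum>p\<in>Zd2 d. f p) = (\<Sum>a<d. \<Sum>b<d. f (a,b))"
  unfolding Zd2_def by (simp add: sum.cartesian_product lessThan_atLeast0)

lemma finite_Zd2[simp]: "finite (Zd2 d)" unfolding Zd2_def by simp

lemma opU_carrier[simp]: "opU d \<in> carrier_mat d d" unfolding opU_def msum_def by simp
lemma opB_carrier[simp]: "opB d \<in> carrier_mat d d" unfolding opB_def msum_def by simp
lemma opU_dim[simp]: "dim_row (opU d) = d" "dim_col (opU d) = d" unfolding opU_def msum_def by simp_all
lemma opB_dim[simp]: "dim_row (opB d) = d" "dim_col (opB d) = d" unfolding opB_def msum_def by simp_all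

lemma opU_entry: assumes i: "i < d" and j: "j < d"
  shows "opU d $$ (i,j) = (if (i + j) mod d = 0 then 1 else 0)"
proof -
  have "opU d $$ (i,j) = (1 / of_nat d) * (\<Sum>a<d. \<Sum>b<d. dispD d (a,b) $$ (i,j))"
    using i j unfolding opU_def by (simp add: msum_entry Zd2_sum)
  also have "(\<Sum>a<d. \<Sum>b<d. dispD d (a,b) $$ (i,j))
     = (\<Sum>a<d. if i = (a + j) mod d then (\<Sum>b<d. w (m * int (a * b) + int b * int j)) else 0)"
    using i j by (intro sum.cong) (auto simp: dispD_entry add.commute)
  also have "\<dots> = (\<Sum>b<d. w (m * int (s j i * b) + int b * int j))"
    using i j by (simp add: sum_shift s_def)
  also have "\<dots> = (\<Sum>b<d. w ((m * int (s j i) + int j) * int b))"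
    by (intro sum.cong) (auto simp: algebra_simps)
  also have "\<dots> = (if int d dvd (m * int (s j i) + int j) then of_nat d else 0)" by (rule w_sum)
  also have "int d dvd (m * int (s j i) + int j) \<longleftrightarrow> (i + j) mod d = 0"
  proof -
    have "int d dvd (m * int (s j i) + int j) \<longleftrightarrow> int d dvd (2 * m * int (s j i) + 2 * int j)"
      using dvd2[of "m * int (s j i) + int j"] by (simp add: algebra_simps)
    also have "\<dots> \<longleftrightarrow> int d dvd (int (s j i) + 2 * int j + int d * int (s j i))"
    proof -
      have "2 * m * int (s j i) = (int d + 1) * int (s j i)" by (simp add: two_m)
      then have "2 * m * int (s j i) + 2 * int j = int (s j i) + 2 * int j + int d * int (s j i)"
        by (simp add: algebra_simps)
      then show ?thesis by (simp only:)
    qed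
    also have "\<dots> \<longleftrightarrow> int d dvd (int (s j i) + 2 * int j)" by (rule dvd_shift)
    also have "\<dots> \<longleftrightarrow> (s j i + 2 * j) mod d = 0 mod d" using nmod_eq[of "s j i + 2 * j" 0] by simp
    also have "(s j i + 2 * j) mod d = (i + d - j + 2 * j) mod d" unfolding s_def by (simp add: mod_add_left_eq)
    also have "i + d - j + 2 * j = (i + j) + d * 1" using j by simp
    finally show ?thesis by simp
  qed
  finally show ?thesis using d_pos by simp
qed

end


context wh begin

definition Vf :: "nat \<Rightarrow> nat \<Rightarrow> nat \<Rightarrow> nat \<Rightarrow> complex" where
  "Vf a b i j = (if (i + j) mod d = (2 * a) mod d then w (int b * (int i - int j)) else 0)"

lemma opU_Vf: "i < d \<Longrightarrow> j < d \<Longrightarrow> opU d $$ (i,j) = Vf 0 0 i j"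
  by (simp add: opU_entry Vf_def)

abbreviation r :: complex where "r \<equiv> complex_of_real (sqrt (real d + 1))"
lemma r_nz: "r \<noteq> 0" by simp
lemma r_sq: "r * r = of_nat d + 1"
proof -
  have "sqrt (real d + 1) * sqrt (real d + 1) = real d + 1" by simp
  then show ?thesis by (metis of_real_mult of_real_of_nat_eq of_real_add of_real_1)
qed
lemma inv_r: "complex_of_real (1 / sqrt (real d + 1)) = 1 / r" by (simp add: of_real_divide)

lemma dispD00: "i < d \<Longrightarrow> j < d \<Longrightarrow> dispD d (0,0) $$ (i,j) = (if i = j then 1 else 0)"
  using d_pos by (simp add: dispD_entry)

lemma opB_entry: assumes i: "i < d" and j: "j < d"
  shows "opB d $$ (i,j) = (of_nat d * Vf 0 0 i j - (if i = j then 1 else 0)) / r"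
proof -
  have "(0::nat,0::nat) \<in> Zd2 d" unfolding Zd2_def using d_pos by simp
  then have "(\<Sum>p\<in>Zd2 d. dispD d p $$ (i,j)) = dispD d (0,0) $$ (i,j) + (\<Sum>p\<in>Zd2star d. dispD d p $$ (i,j))"
    unfolding Zd2star_def by (simp add: sum.remove)
  moreover have "(\<Sum>p\<in>Zd2 d. dispD d p $$ (i,j)) = of_nat d * opU d $$ (i,j)"
    using i j d_pos unfolding opU_def by (simp add: msum_entry)
  ultimately have "(\<Sum>p\<in>Zd2star d. dispD d p $$ (i,j)) = of_nat d * Vf 0 0 i j - (if i = j then 1 else 0)"
    using i j by (simp add: dispD00 opU_Vf)
  then show ?thesis using i j unfolding opB_def by (simp add: msum_entry inv_r)
qed

lemma item1: "opU d = (complex_of_real (1 / real d)) \<cdot>\<^sub>m (1\<^sub>m d + r \<cdot>\<^sub>m opB d)"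
proof (rule eq_matI, goal_cases)
  case (1 i j)
  then have i: "i < d" and j: "j < d" by auto
  show ?case using i j d_pos by (simp add: opB_entry opU_Vf of_real_divide)
qed auto


lemma s_cnd: assumes "a < d" "i < d" "j < d"
  shows "(s a i + s a j) mod d = 0 \<longleftrightarrow> (i + j) mod d = (2 * a) mod d"
proof -
  have "(s a i + s a j) mod d = ((i + d - a) + (j + d - a)) mod d" unfolding s_def by (simp add: mod_add_eq)
  then have "(s a i + s a j) mod d = 0 \<longleftrightarrow> int d dvd (int ((i + d - a) + (j + d - a)) - int 0)"
    using nmod_eq[of "(i + d - a) + (j + d - a)" 0] by simp
  also have "int ((i + d - a) + (j + d - a)) - int 0 = (int (i + j) - int (2 * a)) + int d * 2" using assms by simp
  also have "int d dvd \<dots> \<longleftrightarrow> int d dvd (int (i + j) - int (2 * a))" by (rule dvd_shift)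
  also have "\<dots> \<longleftrightarrow> (i + j) mod d = (2 * a) mod d" by (simp add: nmod_eq)
  finally show ?thesis .
qed

lemma s_inj: assumes "a < d" "i < d" "j < d"
  shows "s a i = s a j \<longleftrightarrow> i = j"
proof -
  have "s a i = s a j \<longleftrightarrow> int d dvd (int (i + d - a) - int (j + d - a))" unfolding s_def by (rule nmod_eq)
  also have "int (i + d - a) - int (j + d - a) = int i - int j" using assms by simp
  also have "int d dvd (int i - int j) \<longleftrightarrow> i mod d = j mod d" by (simp add: nmod_eq)
  finally show ?thesis using assms by simp
qed

lemma DBD_entry: assumes a: "a < d" and i: "i < d" and j: "j < d"
  shows "(dispD d (a,b) * opB d * mat_adjoint (dispD d (a,b))) $$ (i,j)
     = (of_nat d * Vf a b i j - (if i = j then 1 else 0)) / r"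
proof -
  have "(dispD d (a,b) * opB d * mat_adjoint (dispD d (a,b))) $$ (i,j) = opB d $$ (s a i, s a j) * w (int b * (int i - int j))"
    using a i j by (intro conj_entry) auto
  also have "\<dots> = (of_nat d * Vf 0 0 (s a i) (s a j) - (if s a i = s a j then 1 else 0)) / r * w (int b * (int i - int j))"
    by (simp add: opB_entry s_lt)
  also have "\<dots> = (of_nat d * Vf a b i j - (if i = j then 1 else 0)) / r"
    using a i j by (auto simp: Vf_def s_cnd s_inj algebra_simps)
  finally show ?thesis .
qed

lemma povmE_dim[simp]: "dim_row (povmE d p) = d" "dim_col (povmE d p) = d" unfolding povmE_def by simp_all
lemma povmE_carrier[simp]: "povmE d p \<in> carrier_mat d d" unfolding povmE_def
  by (metis carrier_matI povmE_def povmE_dim)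

lemma alg1: "(x::complex) \<noteq> 0 \<Longrightarrow> x + 1 \<noteq> 0 \<Longrightarrow> 1 / x^2 * (t + (x * v - t) / (x + 1)) = 1 / (x * (x + 1)) * (t + v)"
proof -
  assume x: "x \<noteq> 0" and x1: "x + 1 \<noteq> 0"
  have "t + (x * v - t) / (x + 1) = (x * (t + v)) / (x + 1)"
    using x1 by (simp add: field_simps)
  then have "1 / x^2 * (t + (x * v - t) / (x + 1)) = (x * (t + v)) / (x * (x * (x + 1)))"
    by (simp add: power2_eq_square)
  also have "\<dots> = (t + v) / (x * (x + 1))" using x by (rule mult_divide_mult_cancel_left)
  finally show ?thesis by simp
qed

definition cE :: complex where "cE = 1 / (of_nat d * (of_nat d + 1))"

lemma povmE_entry: assumes a: "a < d" and i: "i < d" and j: "j < d"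
  shows "povmE d (a,b) $$ (i,j) = cE * ((if i = j then 1 else 0) + Vf a b i j)"
proof -
  have e: "povmE d (a,b) $$ (i,j) = (1 / (of_nat d)^2) * ((if i = j then 1 else 0) + (1 / r) * ((of_nat d * Vf a b i j - (if i = j then 1 else 0)) / r))"
  proof -
    define M where "M = dispD d (a,b) * opB d * mat_adjoint (dispD d (a,b))"
    have Md: "dim_row M = d" "dim_col M = d" unfolding M_def by simp_all
    have Me: "M $$ (i,j) = (of_nat d * Vf a b i j - (if i = j then 1 else 0)) / r"
      unfolding M_def using a i j by (rule DBD_entry)
    show ?thesis using i j unfolding povmE_def M_def[symmetric]
      by (simp add: Md Me inv_r of_real_divide)
  qed
  have "(1 / r) * ((of_nat d * Vf a b i j - (if i = j then 1 else 0)) / r) = (of_nat d * Vf a b i j - (if i = j then 1 else 0)) / (of_nat d + 1)"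
    using r_sq by (simp add: field_simps)
  then have e2: "povmE d (a,b) $$ (i,j) = (1 / (of_nat d)^2) * ((if i = j then 1 else 0) + (of_nat d * Vf a b i j - (if i = j then 1 else 0)) / (of_nat d + 1))"
    unfolding e by simp
  have dn1: "(of_nat (d + 1) :: complex) \<noteq> 0" by (simp only: of_nat_eq_0_iff)
  have dn: "(of_nat d :: complex) \<noteq> 0" "(of_nat d + 1 :: complex) \<noteq> 0" using d_pos dn1
    by (simp_all add: add.commute)
  show ?thesis unfolding e2 cE_def using dn
    by (rule alg1)
qed

end


context wh begin

lemma w_inv: "w k * w (- k) = 1" by (simp add: w_add[symmetric])

lemma w_inv2: "w (c * (x - y)) * w (c * (y - x)) = 1"
proof -
  have "c * (y - x) = - (c * (x - y))" by (simp add: algebra_simps)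
  then show ?thesis by (simp add: w_inv)
qed

lemma sg_sg: assumes "i < d" shows "sg a (sg a i) = i"
proof -
  have "(i + sg a i) mod d = (2 * a) mod d" using cnd_iff[OF assms sg_lt] by simp
  then have "(sg a i + i) mod d = (2 * a) mod d" by (simp add: add.commute)
  then show ?thesis using cnd_iff[OF sg_lt assms] by simp
qed

lemma Vf_row: assumes "i < d"
  shows "(\<Sum>k<d. Vf a b i k * f k) = w (int b * (int i - int (sg a i))) * f (sg a i)"
proof -
  have "(\<Sum>k<d. Vf a b i k * f k) = (\<Sum>k<d. if (i + k) mod d = (2 * a) mod d then w (int b * (int i - int k)) * f k else 0)"
    by (intro sum.cong) (auto simp: Vf_def)
  also have "\<dots> = w (int b * (int i - int (sg a i))) * f (sg a i)" using assms by (rule sum_cnd)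
  finally show ?thesis .
qed

lemma Vf_col: assumes "j < d"
  shows "(\<Sum>k<d. f k * Vf a b k j) = f (sg a j) * w (int b * (int (sg a j) - int j))"
proof -
  have "(\<Sum>k<d. f k * Vf a b k j) = (\<Sum>k<d. if (k + j) mod d = (2 * a) mod d then f k * w (int b * (int k - int j)) else 0)"
    by (intro sum.cong) (auto simp: Vf_def)
  also have "\<dots> = f (sg a j) * w (int b * (int (sg a j) - int j))" using assms by (rule sum_cnd')
  finally show ?thesis .
qed

lemma Vf_sg: assumes "i < d" "j < d"
  shows "Vf a b (sg a i) j = (if j = i then w (int b * (int (sg a i) - int i)) else 0)"
  unfolding Vf_def cnd_iff[OF sg_lt assms(2)] sg_sg[OF assms(1)] by simp

lemma V1: assumes "i < d" "j < d"
  shows "(\<Sum>k<d. Vf a b i k * Vf a b k j) = (if i = j then 1 else 0)"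
proof -
  have "(\<Sum>k<d. Vf a b i k * Vf a b k j) = w (int b * (int i - int (sg a i))) * Vf a b (sg a i) j"
    using Vf_row[OF assms(1), of a b "\<lambda>k. Vf a b k j"] by simp
  also have "\<dots> = (if i = j then 1 else 0)"
  proof -
    have "int b * (int (sg a i) - int i) = - (int b * (int i - int (sg a i)))" by (simp add: algebra_simps)
    then show ?thesis using assms by (simp add: Vf_sg w_inv2)
  qed
  finally show ?thesis .
qed

lemma two_eq: assumes "a < d" "i < d" shows "(2 * i) mod d = (2 * a) mod d \<longleftrightarrow> i = a"
proof -
  have "(2 * i) mod d = (2 * a) mod d \<longleftrightarrow> int d dvd (2 * (int i - int a))" by (simp add: nmod_eq algebra_simps)
  also have "\<dots> \<longleftrightarrow> int d dvd (int i - int a)" by (rule dvd2)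
  also have "\<dots> \<longleftrightarrow> i mod d = a mod d" by (simp add: nmod_eq)
  finally show ?thesis using assms by simp
qed

lemma V2: assumes "a < d" shows "(\<Sum>i<d. Vf a b i i) = 1"
proof -
  have "(\<Sum>i<d. Vf a b i i) = (\<Sum>i<d. if i = a then 1 else 0)"
    using assms by (intro sum.cong refl) (simp add: Vf_def mult_2[symmetric] two_eq)
  then show ?thesis using assms by simp
qed

lemma Vf_herm: "cnj (Vf a b j i) = Vf a b i j"
proof -
  have "- (int b * (int j - int i)) = int b * (int i - int j)" by (simp add: algebra_simps)
  then show ?thesis unfolding Vf_def by (simp add: w_cnj add.commute)
qed

lemma w_sg: assumes "i < d"
  shows "w (c * (int i - int (sg a i))) = w (2 * c * int i - 2 * c * int a)"
proof -
  have "w (c * (int i - int (sg a i))) = w (c * (int (i mod d) - int ((2 * a + d - i) mod d)))"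
    using assms by (simp add: sg_def)
  also have "\<dots> = w (c * (int i - int (2 * a + d - i)))" by (rule w_natmod)
  also have "c * (int i - int (2 * a + d - i)) = (2 * c * int i - 2 * c * int a) + int d * (- c)"
    using assms by (simp add: algebra_simps of_nat_diff)
  also have "w \<dots> = w (2 * c * int i - 2 * c * int a)" by (simp only: w_add w_d mult_1_right)
  finally show ?thesis .
qed

lemma V3: assumes a: "a < d" and a': "a' < d" and b: "b < d" and b': "b' < d"
  shows "(\<Sum>i<d. \<Sum>k<d. Vf a b i k * Vf a' b' k i) = (if a = a' \<and> b = b' then of_nat d else 0)"
proof -
  have inner: "(\<Sum>k<d. Vf a b i k * Vf a' b' k i) = w (int b * (int i - int (sg a i))) * Vf a' b' (sg a i) i"
    if "i < d" for i using that by (rule Vf_row)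
  show ?thesis
  proof (cases "a = a'")
    case False
    have "Vf a' b' (sg a i) i = 0" if i: "i < d" for i
    proof -
      have "(i + sg a i) mod d = (2 * a) mod d" using cnd_iff[OF i sg_lt] by simp
      moreover have "(2 * a) mod d \<noteq> (2 * a') mod d" using two_eq[OF a' a] False by simp
      ultimately show ?thesis unfolding Vf_def by (auto simp: add.commute)
    qed
    then show ?thesis using False inner by simp
  next
    case True
    have "Vf a' b' (sg a i) i = w (int b' * (int (sg a i) - int i))" if i: "i < d" for i
    proof -
      have "(i + sg a i) mod d = (2 * a) mod d" using cnd_iff[OF i sg_lt] by simp
      then show ?thesis unfolding Vf_def using True by (auto simp: add.commute)
    qed
    then have "(\<Sum>i<d. \<Sum>k<d. Vf a b i k * Vf a' b' k i) = (\<Sum>i<d. w ((int b - int b') * (int i - int (sg a i))))"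
      using inner by (intro sum.cong) (auto simp: w_add[symmetric] algebra_simps)
    also have "\<dots> = (\<Sum>i<d. w (- 2 * (int b - int b') * int a) * w ((2 * (int b - int b')) * int i))"
    proof (intro sum.cong refl)
      fix i assume "i \<in> {..<d}"
      then have i: "i < d" by simp
      have "w ((int b - int b') * (int i - int (sg a i))) = w (2 * (int b - int b') * int i - 2 * (int b - int b') * int a)"
        by (rule w_sg[OF i])
      also have "\<dots> = w (- 2 * (int b - int b') * int a + (2 * (int b - int b')) * int i)"
        by (rule arg_cong[where f=w]) (simp add: algebra_simps)
      finally show "w ((int b - int b') * (int i - int (sg a i))) = w (- 2 * (int b - int b') * int a) * w ((2 * (int b - int b')) * int i)"
        by (simp only: w_add)
    qed
    also have "\<dots> = w (- 2 * (int b - int b') * int a) * (if int d dvd (2 * (int b - int b')) then of_nat d else 0)"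
      by (simp add: sum_distrib_left[symmetric] w_sum)
    also have "int d dvd (2 * (int b - int b')) \<longleftrightarrow> b = b'"
      using dvd2[of "int b - int b'"] nmod_eq[of b b'] b b' by simp
    finally show ?thesis using True by auto
  qed
qed

end


lemma mv_entry: "A \<in> carrier_mat n k \<Longrightarrow> v \<in> carrier_vec k \<Longrightarrow> i < n \<Longrightarrow> (A *\<^sub>v v) $ i = (\<Sum>j<k. A $$ (i,j) * v $ j)"
  by (simp add: scalar_prod_def lessThan_atLeast0)

context wh begin

lemma item2: "hermitian (opU d)"
  unfolding hermitian_def
proof (rule eq_matI, goal_cases)
  case (1 i j)
  then have "i < d" "j < d" by auto
  then show ?case by (simp add: adjoint_entry opU_Vf Vf_herm)
qed auto

lemma item3: "opU d * opU d = 1\<^sub>m d"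
proof (rule eq_matI, goal_cases)
  case (1 i j)
  then have i: "i < d" and j: "j < d" by auto
  have "(opU d * opU d) $$ (i,j) = (\<Sum>k<d. opU d $$ (i,k) * opU d $$ (k,j))"
    using i j by (intro mult_entry) auto
  also have "\<dots> = (\<Sum>k<d. Vf 0 0 i k * Vf 0 0 k j)" using i j by (intro sum.cong) (auto simp: opU_Vf)
  also have "\<dots> = (if i = j then 1 else 0)" using i j by (rule V1)
  finally show ?case using i j by simp
qed auto

lemma item4: "mtrace (opU d) = 1"
proof -
  have "mtrace (opU d) = (\<Sum>i<d. Vf 0 0 i i)" unfolding mtrace_def by (intro sum.cong) (auto simp: opU_Vf)
  also have "\<dots> = 1" using d_pos by (intro V2) 
  finally show ?thesis .
qed

lemma item7: assumes "k < d" shows "opU d *\<^sub>v unit_vec d k = unit_vec d ((d - k) mod d)"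
proof (rule eq_vecI)
  show "dim_vec (opU d *\<^sub>v unit_vec d k) = dim_vec (unit_vec d ((d - k) mod d))" by simp
  fix i assume "i < dim_vec (unit_vec d ((d - k) mod d))"
  then have i: "i < d" by simp
  have "(opU d *\<^sub>v unit_vec d k) $ i = (\<Sum>j<d. opU d $$ (i,j) * unit_vec d k $ j)"
    using i by (intro mv_entry) auto
  also have "\<dots> = (\<Sum>j<d. if j = k then opU d $$ (i,j) else 0)"
    by (intro sum.cong) (auto simp: unit_vec_def)
  also have "\<dots> = Vf 0 0 i k" using assms i by (simp add: opU_Vf)
  also have "\<dots> = (if i = (d - k) mod d then 1 else 0)"
    using cnd_iff[OF assms i, of 0] unfolding Vf_def by (simp add: sg_def add.commute)
  finally show "(opU d *\<^sub>v unit_vec d k) $ i = unit_vec d ((d - k) mod d) $ i"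
    using i by (simp add: unit_vec_def)
qed

lemma opB_mv: assumes v: "v \<in> carrier_vec d" and i: "i < d"
  shows "(opB d *\<^sub>v v) $ i = (of_nat d * (opU d *\<^sub>v v) $ i - v $ i) / r"
proof -
  have "(opB d *\<^sub>v v) $ i = (\<Sum>j<d. opB d $$ (i,j) * v $ j)" using v i by (intro mv_entry) auto
  also have "\<dots> = (\<Sum>j<d. (of_nat d * (opU d $$ (i,j) * v $ j) - (if i = j then v $ j else 0)) / r)"
    using i by (intro sum.cong) (auto simp: opB_entry opU_Vf algebra_simps diff_divide_distrib)
  also have "\<dots> = (of_nat d * (\<Sum>j<d. opU d $$ (i,j) * v $ j) - v $ i) / r"
    using i by (simp add: sum_divide_distrib[symmetric] sum_subtractf sum_distrib_left)
  also have "(\<Sum>j<d. opU d $$ (i,j) * v $ j) = (opU d *\<^sub>v v) $ i" using v i by (intro mv_entry[symmetric]) auto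
  finally show ?thesis .
qed

lemma U_eig: assumes v: "v \<in> carrier_vec d" "v \<noteq> 0\<^sub>v d" and Uv: "opU d *\<^sub>v v = l \<cdot>\<^sub>v v"
  shows "l = 1 \<or> l = -1"
proof -
  have "v = (opU d * opU d) *\<^sub>v v" using v by (simp add: item3)
  also have "\<dots> = opU d *\<^sub>v (opU d *\<^sub>v v)" using v by (intro assoc_mult_mat_vec) auto
  also have "\<dots> = opU d *\<^sub>v (l \<cdot>\<^sub>v v)" by (simp only: Uv)
  also have "\<dots> = l \<cdot>\<^sub>v (opU d *\<^sub>v v)" using v by (intro mult_mat_vec[of _ d d]) auto
  also have "\<dots> = (l * l) \<cdot>\<^sub>v v" by (simp add: Uv smult_smult_assoc)
  finally have e: "v = (l * l) \<cdot>\<^sub>v v" .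
  from v obtain i where i: "i < d" "v $ i \<noteq> 0"
    by (metis carrier_vecD eq_vecI index_zero_vec(1) index_zero_vec(2))
  have "v $ i = (l * l) * v $ i" using e i v by (metis index_smult_vec(1) carrier_vecD)
  then have "l * l = 1" using i by simp
  then show ?thesis by (metis minus_one_mult_self mult_cancel_right square_eq_1_iff)
qed


lemma item8: "eigenvalue (opB d) (- r)"
proof -
  define v :: "complex vec" where "v = unit_vec d 1 - unit_vec d (d - 1)"
  have vc: "v \<in> carrier_vec d" unfolding v_def by simp
  have v1: "v $ 1 = 1" unfolding v_def using d3 by simp
  have vnz: "v \<noteq> 0\<^sub>v d"
  proof
    assume "v = 0\<^sub>v d"
    then have "v $ 1 = 0" using d3 by simp
    with v1 show False by simp
  qed
  have Uv: "opU d *\<^sub>v v = - v"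
  proof -
    have "opU d *\<^sub>v v = opU d *\<^sub>v unit_vec d 1 - opU d *\<^sub>v unit_vec d (d - 1)"
      unfolding v_def by (rule mult_minus_distrib_mat_vec[of _ d d]) auto
    also have "\<dots> = unit_vec d (d - 1) - unit_vec d 1" using d3 by (simp add: item7)
    also have "\<dots> = - v" unfolding v_def by (rule eq_vecI) auto
    finally show ?thesis .
  qed
  have "opB d *\<^sub>v v = (- r) \<cdot>\<^sub>v v"
  proof (rule eq_vecI)
    fix i assume "i < dim_vec ((- r) \<cdot>\<^sub>v v)"
    then have i: "i < d" using vc by simp
    have "(opB d *\<^sub>v v) $ i = (of_nat d * (- v $ i) - v $ i) / r" using opB_mv[OF vc i] Uv i vc by simp
    also have "\<dots> = - ((of_nat d + 1) / r) * v $ i" by (simp add: field_simps)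
    also have "(of_nat d + 1) / r = r" using r_sq r_nz by (simp add: field_simps)
    finally show "(opB d *\<^sub>v v) $ i = ((- r) \<cdot>\<^sub>v v) $ i" using i vc by simp
  qed (use vc in simp)
  then show ?thesis unfolding eigenvalue_def eigenvector_def using vc vnz by auto
qed

lemma item9: assumes "eigenvalue (opB d) ev"
  shows "ev \<in> \<real> \<and> - sqrt (real d + 1) \<le> Re ev"
proof -
  from assms obtain v where vc: "v \<in> carrier_vec d" and vnz: "v \<noteq> 0\<^sub>v d" and Bv: "opB d *\<^sub>v v = ev \<cdot>\<^sub>v v"
    unfolding eigenvalue_def eigenvector_def by auto
  define l where "l = (r * ev + 1) / of_nat d"
  have dnz: "(of_nat d :: complex) \<noteq> 0" using d_pos by simp
  have Uv: "opU d *\<^sub>v v = l \<cdot>\<^sub>v v"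
  proof (rule eq_vecI)
    fix i assume "i < dim_vec (l \<cdot>\<^sub>v v)"
    then have i: "i < d" using vc by simp
    have "ev * v $ i = (of_nat d * (opU d *\<^sub>v v) $ i - v $ i) / r"
      using opB_mv[OF vc i] Bv i vc by (metis carrier_vecD index_smult_vec(1))
    then have "r * ev * v $ i = of_nat d * (opU d *\<^sub>v v) $ i - v $ i" using r_nz by (simp add: field_simps)
    then have "(opU d *\<^sub>v v) $ i = l * v $ i" unfolding l_def using dnz by (simp add: field_simps)
    then show "(opU d *\<^sub>v v) $ i = (l \<cdot>\<^sub>v v) $ i" using i vc by simp
  qed (use vc in simp)
  have ev: "ev = (of_nat d * l - 1) / r" unfolding l_def using dnz r_nz by (simp add: field_simps)
  from U_eig[OF vc vnz Uv] show ?thesis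
  proof
    assume "l = 1"
    then have "ev = complex_of_real ((real d - 1) / sqrt (real d + 1))" unfolding ev by (simp add: of_real_divide)
    moreover have "- sqrt (real d + 1) \<le> (real d - 1) / sqrt (real d + 1)"
    proof -
      have "0 \<le> (real d - 1) / sqrt (real d + 1)" using d3 by simp
      moreover have "- sqrt (real d + 1) \<le> 0" by simp
      ultimately show ?thesis by linarith
    qed
    ultimately show ?thesis by simp
  next
    assume "l = -1"
    then have "ev = - r" unfolding ev using r_sq r_nz by (simp add: field_simps)
    then show ?thesis by simp
  qed
qed

end


lemma mtrace_comm: assumes A: "A \<in> carrier_mat n k" and B: "B \<in> carrier_mat k n"
  shows "mtrace (A * B) = mtrace (B * A)"
proof -
  have e1: "\<And>i. i < n \<Longrightarrow> (A * B) $$ (i,i) = (\<Sum>t<k. A $$ (i,t) * B $$ (t,i))"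
    using mult_entry[OF A B] by blast
  have e2: "\<And>t. t < k \<Longrightarrow> (B * A) $$ (t,t) = (\<Sum>i<n. B $$ (t,i) * A $$ (i,t))"
    using mult_entry[OF B A] by blast
  have "mtrace (A * B) = (\<Sum>i<n. \<Sum>t<k. A $$ (i,t) * B $$ (t,i))"
    unfolding mtrace_def using A e1 by simp
  also have "\<dots> = (\<Sum>t<k. \<Sum>i<n. B $$ (t,i) * A $$ (i,t))"
    by (subst sum.swap) (simp add: mult.commute)
  also have "\<dots> = mtrace (B * A)"
    unfolding mtrace_def using B e2 by simp
  finally show ?thesis .
qed

lemma similar_mtrace: assumes "similar_mat A B" shows "mtrace A = mtrace B"
proof -
  from similar_matD[OF assms] obtain n P Q where c: "{A, B, P, Q} \<subseteq> carrier_mat n n"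
    and QP: "Q * P = 1\<^sub>m n" and AB: "A = P * B * Q" by auto
  then have P: "P \<in> carrier_mat n n" and B: "B \<in> carrier_mat n n" and Q: "Q \<in> carrier_mat n n" by auto
  have "mtrace A = mtrace ((P * B) * Q)" using AB by simp
  also have "\<dots> = mtrace (Q * (P * B))" using P B Q by (intro mtrace_comm[of _ n n]) auto
  also have "Q * (P * B) = (Q * P) * B" using P B Q by (simp add: assoc_mult_mat)
  also have "\<dots> = B" using QP B by simp
  finally show ?thesis .
qed

lemma mtrace_diag: "mtrace T = sum_list (diag_mat T)"
  unfolding mtrace_def diag_mat_def
  by (simp add: sum.distinct_set_conv_list[symmetric] atLeast0LessThan[symmetric])

lemma order_prod_lin: "order c (\<Prod>a\<leftarrow>xs. [:- a, 1:]) = count_list xs (c :: complex)"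
proof (induction xs)
  case Nil
  then show ?case by (simp add: order_0I)
next
  case (Cons x xs)
  have nz: "(\<Prod>a\<leftarrow>xs. [:- a, 1:]) \<noteq> (0 :: complex poly)" by (auto simp: prod_list_zero_iff)
  have "[:- x, 1:] \<noteq> (0 :: complex poly)" by simp
  then have "[:- x, 1:] * (\<Prod>a\<leftarrow>xs. [:- a, 1:]) \<noteq> (0 :: complex poly)" using nz by (rule no_zero_divisors)
  then have o: "order c ([:- x, 1:] * (\<Prod>a\<leftarrow>xs. [:- a, 1:])) = order c [:- x, 1:] + order c (\<Prod>a\<leftarrow>xs. [:- a, 1:])"
    by (rule order_mult)
  have ol: "order c [:- x, 1:] = (if x = c then 1 else 0)" by (simp add: order_linear')
  have eq: "(\<Prod>a\<leftarrow>x # xs. [:- a, 1:]) = [:- x, 1:] * (\<Prod>a\<leftarrow>xs. [:- a, 1:])" by simp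
  show ?case by (simp only: eq o Cons.IH ol) simp
qed

lemma count_pm: "set xs \<subseteq> {1, -1 :: complex} \<Longrightarrow>
   sum_list xs = of_nat (count_list xs 1) - of_nat (count_list xs (-1)) \<and> length xs = count_list xs 1 + count_list xs (-1)"
  by (induction xs) auto

context wh begin

lemma item56: "order 1 (char_poly (opU d)) = (d + 1) div 2 \<and> order (-1) (char_poly (opU d)) = (d - 1) div 2"
proof -
  have U: "opU d \<in> carrier_mat d d" by simp
  from char_poly_factorized[OF U] obtain es where cp: "char_poly (opU d) = (\<Prod>a\<leftarrow>es. [:- a, 1:])" by auto
  define T where "T = schur_upper_triangular (opU d) es"
  have T: "T \<in> carrier_mat d d" "upper_triangular T" "similar_mat (opU d) T"
    using schur_upper_triangular[OF U cp] unfolding T_def by auto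
  define xs where "xs = diag_mat T"
  have cpx: "char_poly (opU d) = (\<Prod>a\<leftarrow>xs. [:- a, 1:])"
    unfolding xs_def char_poly_similar[OF T(3)] by (rule char_poly_upper_triangular[OF T(1,2)])
  have len: "length xs = d" unfolding xs_def diag_mat_def using T(1) by simp
  have sum: "sum_list xs = 1" unfolding xs_def mtrace_diag[symmetric] similar_mtrace[OF T(3), symmetric] by (rule item4)
  have pm: "set xs \<subseteq> {1, -1}"
  proof
    fix x assume x: "x \<in> set xs"
    have "order x (char_poly (opU d)) \<noteq> 0" unfolding cpx order_prod_lin using x by (simp add: count_list_0_iff)
    moreover have "char_poly (opU d) \<noteq> 0" unfolding cpx by (auto simp: prod_list_zero_iff)
    ultimately have "poly (char_poly (opU d)) x = 0" using order_0I[of "char_poly (opU d)" x] by auto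
    then have "eigenvalue (opU d) x" using eigenvalue_root_char_poly[OF U] by simp
    then obtain v where "v \<in> carrier_vec d" "v \<noteq> 0\<^sub>v d" "opU d *\<^sub>v v = x \<cdot>\<^sub>v v"
      unfolding eigenvalue_def eigenvector_def by auto
    then show "x \<in> {1, -1}" using U_eig by auto
  qed
  from count_pm[OF pm] sum len
  have "(1::complex) = of_nat (count_list xs 1) - of_nat (count_list xs (-1))" and
    l: "d = count_list xs 1 + count_list xs (-1)" by auto
  then have "int (count_list xs 1) = int (count_list xs (-1)) + 1"
    by (metis (mono_tags, opaque_lifting) add.commute diff_eq_eq of_int_eq_iff of_int_of_nat_eq of_int_add of_int_1)
  then have c1: "count_list xs 1 = count_list xs (-1) + 1" by simp
  then have "count_list xs 1 = (d + 1) div 2" "count_list xs (-1) = (d - 1) div 2" using l by auto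
  then show ?thesis unfolding cpx order_prod_lin by simp
qed

end


lemma sum_expand: fixes i j n :: nat assumes "i < n" "j < n"
  shows "(\<Sum>k<n. ((if i = k then 1 else 0) + X k) * ((if k = j then 1 else 0) + Y k))
     = (if i = j then 1 else 0) + Y i + X j + (\<Sum>k<n. X k * Y k :: complex)"
proof -
  have "(\<Sum>k<n. ((if i = k then 1 else 0) + X k) * ((if k = j then 1 else 0) + Y k))
     = (\<Sum>k<n. (if k = i then (if k = j then 1 else 0) else 0)) + (\<Sum>k<n. if k = i then Y k else 0)
       + (\<Sum>k<n. if k = j then X k else 0) + (\<Sum>k<n. X k * Y k)"
  proof -
    have "\<And>k. ((if i = k then 1 else 0) + X k) * ((if k = j then 1 else 0) + Y k)
      = (if k = i then (if k = j then 1 else 0) else 0) + (if k = i then Y k else 0) + (if k = j then X k else 0) + X k * Y k"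
      by (auto simp: algebra_simps)
    then show ?thesis by (simp only: sum.distrib)
  qed
  also have "\<dots> = (if i = j then 1 else 0) + Y i + X j + (\<Sum>k<n. X k * Y k)"
    using assms by (simp add: sum.delta sum.delta')
  finally show ?thesis .
qed

lemma qf_nonneg: fixes n :: nat
  assumes E: "\<And>i j. i < n \<Longrightarrow> j < n \<Longrightarrow> E i j = (\<Sum>k<n. f i k * f k j)"
    and f: "\<And>i k. i < n \<Longrightarrow> k < n \<Longrightarrow> cnj (f k i) = f i k"
  shows "0 \<le> Re (\<Sum>i<n. cnj (v i) * (\<Sum>j<n. E i j * v j))"
proof -
  define y where "y k = (\<Sum>j<n. f k j * v j)" for k
  have cy: "cnj (y k) = (\<Sum>i<n. cnj (v i) * f i k)" if k: "k < n" for k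
    unfolding y_def using f k by (simp add: mult.commute)
  have "(\<Sum>i<n. cnj (v i) * (\<Sum>j<n. E i j * v j)) = (\<Sum>i<n. cnj (v i) * (\<Sum>j<n. \<Sum>k<n. f i k * f k j * v j))"
    using E by (intro sum.cong refl) (simp add: sum_distrib_right)
  also have "\<dots> = (\<Sum>i<n. cnj (v i) * (\<Sum>k<n. f i k * y k))"
  proof (intro sum.cong refl)
    fix i
    have "(\<Sum>j<n. \<Sum>k<n. f i k * f k j * v j) = (\<Sum>k<n. \<Sum>j<n. f i k * f k j * v j)" by (rule sum.swap)
    also have "\<dots> = (\<Sum>k<n. f i k * y k)" unfolding y_def by (simp add: sum_distrib_left mult.assoc)
    finally show "cnj (v i) * (\<Sum>j<n. \<Sum>k<n. f i k * f k j * v j) = cnj (v i) * (\<Sum>k<n. f i k * y k)" by simp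
  qed
  also have "\<dots> = (\<Sum>k<n. (\<Sum>i<n. cnj (v i) * f i k) * y k)"
  proof -
    have "(\<Sum>i<n. cnj (v i) * (\<Sum>k<n. f i k * y k)) = (\<Sum>i<n. \<Sum>k<n. cnj (v i) * f i k * y k)"
      by (simp add: sum_distrib_left mult.assoc)
    also have "\<dots> = (\<Sum>k<n. \<Sum>i<n. cnj (v i) * f i k * y k)" by (rule sum.swap)
    also have "\<dots> = (\<Sum>k<n. (\<Sum>i<n. cnj (v i) * f i k) * y k)" by (simp add: sum_distrib_right)
    finally show ?thesis .
  qed
  also have "\<dots> = (\<Sum>k<n. cnj (y k) * y k)" using cy by simp
  finally have eq: "(\<Sum>i<n. cnj (v i) * (\<Sum>j<n. E i j * v j)) = (\<Sum>k<n. cnj (y k) * y k)" .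
  have "Re (\<Sum>k<n. cnj (y k) * y k) = (\<Sum>k<n. (Re (y k))^2 + (Im (y k))^2)"
    by (simp add: Re_sum power2_eq_square)
  also have "\<dots> \<ge> 0" by (simp add: sum_nonneg)
  finally show ?thesis unfolding eq .
qed


context wh begin

lemma dpos_c: "(of_nat d :: complex) \<noteq> 0" "(of_nat d + 1 :: complex) \<noteq> 0"
proof -
  have "(of_nat (d + 1) :: complex) \<noteq> 0" by (simp only: of_nat_eq_0_iff)
  then show "(of_nat d + 1 :: complex) \<noteq> 0" by (simp add: add.commute)
  show "(of_nat d :: complex) \<noteq> 0" using d_pos by simp
qed

lemma cE_real: "cE = complex_of_real (1 / (real d * (real d + 1)))"
  unfolding cE_def by (simp add: of_real_divide)
lemma cE_cnj: "cnj cE = cE" unfolding cE_real by (simp only: complex_cnj_complex_of_real)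

definition kap :: complex where "kap = complex_of_real (sqrt (1 / (2 * (real d * (real d + 1)))))"
lemma kap_cnj: "cnj kap = kap" unfolding kap_def by (simp only: complex_cnj_complex_of_real)
lemma kap_sq: "kap * kap = cE / 2"
proof -
  have "sqrt (1 / (2 * (real d * (real d + 1)))) * sqrt (1 / (2 * (real d * (real d + 1)))) = 1 / (2 * (real d * (real d + 1)))"
    by (simp del: real_sqrt_mult_self add: real_sqrt_mult_self) 
  then show ?thesis unfolding kap_def cE_real
    by (metis (no_types, lifting) of_real_mult of_real_divide of_real_numeral divide_divide_eq_left' mult.commute)
qed

lemma povmE_herm: assumes a: "a < d" shows "hermitian (povmE d (a,b))"
  unfolding hermitian_def
proof (rule eq_matI, goal_cases)
  case (1 i j)
  then have i: "i < d" and j: "j < d" by auto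
  then show ?case using a by (simp add: adjoint_entry povmE_entry cE_cnj Vf_herm)
qed auto

lemma povmE_FF: assumes a: "a < d" and i: "i < d" and j: "j < d"
  shows "povmE d (a,b) $$ (i,j) = (\<Sum>k<d. (kap * ((if i = k then 1 else 0) + Vf a b i k)) * (kap * ((if k = j then 1 else 0) + Vf a b k j)))"
proof -
  have "(\<Sum>k<d. (kap * ((if i = k then 1 else 0) + Vf a b i k)) * (kap * ((if k = j then 1 else 0) + Vf a b k j)))
     = (kap * kap) * (\<Sum>k<d. ((if i = k then 1 else 0) + Vf a b i k) * ((if k = j then 1 else 0) + Vf a b k j))"
    by (simp add: sum_distrib_left algebra_simps)
  also have "(\<Sum>k<d. ((if i = k then 1 else 0) + Vf a b i k) * ((if k = j then 1 else 0) + Vf a b k j))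
     = (if i = j then 1 else 0) + Vf a b i j + Vf a b i j + (\<Sum>k<d. Vf a b i k * Vf a b k j)"
    using i j by (rule sum_expand)
  also have "(\<Sum>k<d. Vf a b i k * Vf a b k j) = (if i = j then 1 else 0)" using i j by (rule V1)
  finally show ?thesis using a i j by (simp add: povmE_entry kap_sq algebra_simps)
qed

lemma povmE_psd: assumes a: "a < d" shows "psd d (povmE d (a,b))"
  unfolding psd_def
proof (intro conjI ballI)
  show "povmE d (a, b) \<in> carrier_mat d d" by simp
  show "hermitian (povmE d (a, b))" using a by (rule povmE_herm)
  fix v :: "complex vec" assume v: "v \<in> carrier_vec d"
  have "(\<Sum>i<d. cnj (v $ i) * (povmE d (a, b) *\<^sub>v v) $ i) = (\<Sum>i<d. cnj (v $ i) * (\<Sum>j<d. povmE d (a,b) $$ (i,j) * v $ j))"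
  proof (intro sum.cong refl)
    fix i assume "i \<in> {..<d}"
    then have "(povmE d (a, b) *\<^sub>v v) $ i = (\<Sum>j<d. povmE d (a,b) $$ (i,j) * v $ j)"
      using mv_entry[OF povmE_carrier v] by simp
    then show "cnj (v $ i) * (povmE d (a, b) *\<^sub>v v) $ i = cnj (v $ i) * (\<Sum>j<d. povmE d (a,b) $$ (i,j) * v $ j)" by simp
  qed
  moreover have "0 \<le> Re (\<Sum>i<d. cnj (v $ i) * (\<Sum>j<d. povmE d (a,b) $$ (i,j) * v $ j))"
  proof (rule qf_nonneg[where f = "\<lambda>i k. kap * ((if i = k then 1 else 0) + Vf a b i k)"])
    fix i j assume ij: "i < d" "j < d"
    show "povmE d (a,b) $$ (i,j) = (\<Sum>k<d. (kap * ((if i = k then 1 else 0) + Vf a b i k)) * (kap * ((if k = j then 1 else 0) + Vf a b k j)))"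
      by (rule povmE_FF[OF a ij])
  next
    fix i k
    show "cnj (kap * ((if k = i then 1 else 0) + Vf a b k i)) = kap * ((if i = k then 1 else 0) + Vf a b i k)"
      by (simp add: kap_cnj Vf_herm)
  qed
  ultimately show "0 \<le> Re (\<Sum>i<d. cnj (v $ i) * (povmE d (a, b) *\<^sub>v v) $ i)" by simp
qed

lemma msum_povmE: "msum d (povmE d) (Zd2 d) = 1\<^sub>m d"
proof (rule eq_matI, goal_cases)
  case (1 i j)
  then have i: "i < d" and j: "j < d" by auto
  have "msum d (povmE d) (Zd2 d) $$ (i,j) = (\<Sum>a<d. \<Sum>b<d. povmE d (a,b) $$ (i,j))"
    using i j by (simp add: msum_entry Zd2_sum)
  also have "\<dots> = (\<Sum>a<d. \<Sum>b<d. cE * ((if i = j then 1 else 0) + Vf a b i j))"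
    using i j by (intro sum.cong refl) (simp add: povmE_entry)
  also have "\<dots> = cE * (of_nat d * of_nat d * (if i = j then 1 else 0) + (\<Sum>a<d. \<Sum>b<d. Vf a b i j))"
    by (simp add: sum_distrib_left[symmetric] sum.distrib algebra_simps)
  also have "(\<Sum>a<d. \<Sum>b<d. Vf a b i j) = (\<Sum>a<d. if (i + j) mod d = (2 * a) mod d then (\<Sum>b<d. w ((int i - int j) * int b)) else 0)"
    unfolding Vf_def by (intro sum.cong refl) (simp add: mult.commute)
  also have "\<dots> = (\<Sum>a<d. if (i + j) mod d = (2 * a) mod d then (if i = j then of_nat d else 0) else 0)"
  proof (intro sum.cong refl)
    fix a
    have "int d dvd (int i - int j) \<longleftrightarrow> i = j" using nmod_eq[of i j] i j by simp
    then show "(if (i + j) mod d = (2 * a) mod d then (\<Sum>b<d. w ((int i - int j) * int b)) else 0)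
        = (if (i + j) mod d = (2 * a) mod d then (if i = j then of_nat d else 0) else 0)"
      by (simp add: w_sum)
  qed
  also have "\<dots> = (if i = j then of_nat d else 0)"
  proof (cases "i = j")
    case True
    have "(\<Sum>a<d. if (i + j) mod d = (2 * a) mod d then (if i = j then of_nat d else 0) else 0)
        = (\<Sum>a<d. if a = i then of_nat d else (0::complex))"
      using True i by (intro sum.cong refl) (auto simp: mult_2[symmetric] two_eq)
    then show ?thesis using True i by simp
  qed simp
  finally have "msum d (povmE d) (Zd2 d) $$ (i,j) = cE * (of_nat d * of_nat d * (if i = j then 1 else 0) + (if i = j then of_nat d else 0))" .
  moreover have "cE * (of_nat d * of_nat d + of_nat d) = 1"
  proof -
    have "of_nat d * of_nat d + of_nat d = of_nat d * (of_nat d + (1::complex))" by (simp add: algebra_simps)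
    then show ?thesis unfolding cE_def using dpos_c by simp
  qed
  ultimately show ?case using i j by (cases "i = j") simp_all
qed auto

end


context wh begin

lemma tr_EE: assumes a: "a < d" and a': "a' < d" and b: "b < d" and b': "b' < d"
  shows "mtrace (povmE d (a,b) * povmE d (a',b')) = cE * cE * (of_nat d + 2 + (if a = a' \<and> b = b' then of_nat d else 0))"
proof -
  have "mtrace (povmE d (a,b) * povmE d (a',b')) = (\<Sum>i<d. \<Sum>k<d. povmE d (a,b) $$ (i,k) * povmE d (a',b') $$ (k,i))"
    unfolding mtrace_def by (intro sum.cong refl, simp, rule mult_entry[OF povmE_carrier povmE_carrier]) auto
  also have "\<dots> = (\<Sum>i<d. cE * cE * (\<Sum>k<d. ((if i = k then 1 else 0) + Vf a b i k) * ((if k = i then 1 else 0) + Vf a' b' k i)))"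
    using a a' by (intro sum.cong refl) (simp add: povmE_entry sum_distrib_left algebra_simps)
  also have "\<dots> = (\<Sum>i<d. cE * cE * (1 + Vf a' b' i i + Vf a b i i + (\<Sum>k<d. Vf a b i k * Vf a' b' k i)))"
    by (intro sum.cong refl) (simp add: sum_expand)
  also have "\<dots> = cE * cE * (of_nat d + (\<Sum>i<d. Vf a' b' i i) + (\<Sum>i<d. Vf a b i i) + (\<Sum>i<d. \<Sum>k<d. Vf a b i k * Vf a' b' k i))"
    by (simp add: sum_distrib_left[symmetric] sum.distrib)
  also have "\<dots> = cE * cE * (of_nat d + 2 + (if a = a' \<and> b = b' then of_nat d else 0))"
    using a a' b b' by (simp add: V2 V3)
  finally show ?thesis .
qed

lemma Zd2_mem: "p \<in> Zd2 d \<longleftrightarrow> fst p < d \<and> snd p < d" unfolding Zd2_def by (cases p) auto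

lemma is_povm: "is_POVM d (povmE d) (Zd2 d)"
  unfolding is_POVM_def using povmE_psd msum_povmE by (auto simp: Zd2_mem)

lemma sym_povm: "symmetric_POVM d (povmE d) (Zd2 d)"
  unfolding symmetric_POVM_def
proof (intro conjI is_povm exI ballI)
  fix p q assume p: "p \<in> Zd2 d" and q: "q \<in> Zd2 d"
  obtain a b where pab: "p = (a,b)" by (cases p)
  obtain a' b' where qab: "q = (a',b')" by (cases q)
  have ab: "a < d" "b < d" "a' < d" "b' < d" using p q pab qab by (auto simp: Zd2_mem)
  have "mtrace (povmE d p * povmE d q) = cE * cE * (of_nat d + 2 + (if a = a' \<and> b = b' then of_nat d else 0))"
    unfolding pab qab using ab by (intro tr_EE)
  also have "\<dots> = complex_of_real ((1 / (real d * (real d + 1)))^2 * (real d + 2) + (if p = q then (1 / (real d * (real d + 1)))^2 * real d else 0))"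
  proof -
    define c where "c = 1 / (real d * (real d + 1))"
    have pq: "p = q \<longleftrightarrow> a = a' \<and> b = b'" by (simp add: pab qab)
    show ?thesis unfolding cE_real c_def[symmetric] pq
      by (cases "a = a' \<and> b = b'") (simp_all add: power2_eq_square algebra_simps del: de_Morgan_conj)
  qed
  finally show "mtrace (povmE d p * povmE d q) = complex_of_real ((1 / (real d * (real d + 1)))^2 * (real d + 2) + (if p = q then (1 / (real d * (real d + 1)))^2 * real d else 0))" .
qed


definition Bpp :: "nat \<Rightarrow> nat \<Rightarrow> complex mat" where
  "Bpp a b = complex_of_real (1 / sqrt (real d + 1)) \<cdot>\<^sub>m (dispD d (a,b) * opB d * mat_adjoint (dispD d (a,b)))"

lemma Bpp_dim[simp]: "dim_row (Bpp a b) = d" "dim_col (Bpp a b) = d" unfolding Bpp_def by simp_all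
lemma Bpp_carrier[simp]: "Bpp a b \<in> carrier_mat d d" by (rule carrier_matI) simp_all

lemma Bpp_entry: assumes a: "a < d" and i: "i < d" and j: "j < d"
  shows "Bpp a b $$ (i,j) = (of_nat d * Vf a b i j - (if i = j then 1 else 0)) / (of_nat d + 1)"
proof -
  define M where "M = dispD d (a,b) * opB d * mat_adjoint (dispD d (a,b))"
  have Md: "dim_row M = d" "dim_col M = d" unfolding M_def by simp_all
  have Me: "M $$ (i,j) = (of_nat d * Vf a b i j - (if i = j then 1 else 0)) / r"
    unfolding M_def using a i j by (rule DBD_entry)
  have "Bpp a b $$ (i,j) = (1 / r) * ((of_nat d * Vf a b i j - (if i = j then 1 else 0)) / r)"
    unfolding Bpp_def M_def[symmetric] using i j Md Me by (simp add: inv_r)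
  also have "\<dots> = (of_nat d * Vf a b i j - (if i = j then 1 else 0)) / (r * r)" by simp
  finally show ?thesis unfolding r_sq .
qed

lemma Bpp_herm: assumes a: "a < d" shows "hermitian (Bpp a b)"
  unfolding hermitian_def
proof (rule eq_matI, goal_cases)
  case (1 i j)
  then have i: "i < d" and j: "j < d" by auto
  have "cnj (of_nat d + 1 :: complex) = of_nat d + 1" by simp
  then show ?case using a i j by (simp add: adjoint_entry Bpp_entry Vf_herm eq_commute[of j i])
qed auto

lemma Bpp_tr: assumes a: "a < d" shows "mtrace (Bpp a b) = 0"
proof -
  have "mtrace (Bpp a b) = (\<Sum>i<d. (of_nat d * Vf a b i i - 1) / (of_nat d + 1))"
    unfolding mtrace_def using a by (intro sum.cong refl) (simp_all add: Bpp_entry)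
  also have "\<dots> = (of_nat d * (\<Sum>i<d. Vf a b i i) - of_nat d) / (of_nat d + 1)"
    by (simp add: sum_divide_distrib[symmetric] sum_subtractf sum_distrib_left)
  also have "\<dots> = 0" using a by (simp add: V2)
  finally show ?thesis .
qed

lemma Bpp_tr2: assumes a: "a < d" and b: "b < d"
  shows "mtrace (Bpp a b * Bpp a b) = (of_nat d ^ 3 - of_nat d) / (of_nat d + 1)^2"
proof -
  have "mtrace (Bpp a b * Bpp a b) = (\<Sum>i<d. \<Sum>k<d. Bpp a b $$ (i,k) * Bpp a b $$ (k,i))"
    unfolding mtrace_def by (intro sum.cong refl, simp, rule mult_entry[OF Bpp_carrier Bpp_carrier]) auto
  also have "\<dots> = (\<Sum>i<d. (\<Sum>k<d. ((if i = k then 1 else 0) + (- of_nat d) * Vf a b i k) * ((if k = i then 1 else 0) + (- of_nat d) * Vf a b k i)) / (of_nat d + 1)^2)"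
  proof (intro sum.cong refl)
    fix i assume "i \<in> {..<d}"
    then have i: "i < d" by simp
    have "(\<Sum>k<d. Bpp a b $$ (i,k) * Bpp a b $$ (k,i))
      = (\<Sum>k<d. (((if i = k then 1 else 0) + (- of_nat d) * Vf a b i k) * ((if k = i then 1 else 0) + (- of_nat d) * Vf a b k i)) / (of_nat d + 1)^2)"
      using a i by (intro sum.cong refl) (auto simp: Bpp_entry power2_eq_square algebra_simps)
    then show "(\<Sum>k<d. Bpp a b $$ (i,k) * Bpp a b $$ (k,i)) = (\<Sum>k<d. ((if i = k then 1 else 0) + (- of_nat d) * Vf a b i k) * ((if k = i then 1 else 0) + (- of_nat d) * Vf a b k i)) / (of_nat d + 1)^2"
      by (simp add: sum_divide_distrib)
  qed
  also have "\<dots> = (\<Sum>i<d. (1 - of_nat d * Vf a b i i - of_nat d * Vf a b i i + of_nat d * of_nat d * (\<Sum>k<d. Vf a b i k * Vf a b k i)) / (of_nat d + 1)^2)"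
  proof (intro sum.cong refl)
    fix i assume "i \<in> {..<d}"
    then have i: "i < d" by simp
    have "(\<Sum>k<d. ((if i = k then 1 else 0) + (- of_nat d) * Vf a b i k) * ((if k = i then 1 else 0) + (- of_nat d) * Vf a b k i))
      = (if i = i then 1 else 0) + (- of_nat d) * Vf a b i i + (- of_nat d) * Vf a b i i + (\<Sum>k<d. ((- of_nat d) * Vf a b i k) * ((- of_nat d) * Vf a b k i))"
      by (rule sum_expand[OF i i])
    also have "\<dots> = 1 - of_nat d * Vf a b i i - of_nat d * Vf a b i i + of_nat d * of_nat d * (\<Sum>k<d. Vf a b i k * Vf a b k i)"
      by (simp add: sum_distrib_left algebra_simps)
    finally show "(\<Sum>k<d. ((if i = k then 1 else 0) + (- of_nat d) * Vf a b i k) * ((if k = i then 1 else 0) + (- of_nat d) * Vf a b k i)) / (of_nat d + 1)^2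
       = (1 - of_nat d * Vf a b i i - of_nat d * Vf a b i i + of_nat d * of_nat d * (\<Sum>k<d. Vf a b i k * Vf a b k i)) / (of_nat d + 1)^2" by simp
  qed
  also have "\<dots> = (of_nat d - 2 * of_nat d * (\<Sum>i<d. Vf a b i i) + of_nat d * of_nat d * (\<Sum>i<d. \<Sum>k<d. Vf a b i k * Vf a b k i)) / (of_nat d + 1)^2"
    by (simp add: sum_divide_distrib[symmetric] sum.distrib sum_subtractf sum_distrib_left algebra_simps)
  also have "\<dots> = (of_nat d ^ 3 - of_nat d) / (of_nat d + 1)^2"
    using a b by (simp add: V2 V3 power3_eq_cube)
  finally show ?thesis .
qed

lemma Bpp_hs: assumes a: "a < d" and b: "b < d"
  shows "hs_norm d (Bpp a b) = 1 / sqrt (real d + 1)"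
proof -
  have "Re (mtrace (Bpp a b * Bpp a b)) = (real d ^ 3 - real d) / (real d + 1)^2"
  proof -
    have "(of_nat d ^ 3 - of_nat d) / (of_nat d + 1)^2 = complex_of_real ((real d ^ 3 - real d) / (real d + 1)^2)"
      by (simp add: of_real_divide)
    then show ?thesis unfolding Bpp_tr2[OF a b] by (simp only: Re_complex_of_real)
  qed
  also have "\<dots> = (real d * (real d - 1)) / (real d + 1)"
  proof -
    have "real d ^ 3 - real d = (real d * (real d - 1)) * (real d + 1)" by (simp add: power3_eq_cube algebra_simps)
    then show ?thesis by (simp add: power2_eq_square)
  qed
  finally have "Re (mtrace (Bpp a b * Bpp a b)) / (real d * (real d - 1)) = 1 / (real d + 1)"
    using d3 by simp
  then show ?thesis unfolding hs_norm_def by (simp add: real_sqrt_divide)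
qed

lemma item14: assumes p: "p \<in> Zd2 d"
  shows "let B' = dispD d p * opB d * mat_adjoint (dispD d p) ;
                  B'' = complex_of_real (1 / sqrt (real d + 1)) \<cdot>\<^sub>m B'
              in povmE d p = complex_of_real (1 / (real d)^2) \<cdot>\<^sub>m (1\<^sub>m d + B'')
                 \<and> hermitian B'' \<and> mtrace B'' = 0
                 \<and> hs_norm d B'' = 1 / sqrt (real d + 1)"
proof -
  obtain a b where pab: "p = (a,b)" by (cases p)
  have ab: "a < d" "b < d" using p pab by (auto simp: Zd2_mem)
  have B: "complex_of_real (1 / sqrt (real d + 1)) \<cdot>\<^sub>m (dispD d p * opB d * mat_adjoint (dispD d p)) = Bpp a b"
    unfolding Bpp_def pab ..
  show ?thesis unfolding Let_def B
    using Bpp_herm[OF ab(1)] Bpp_tr[OF ab(1)] Bpp_hs[OF ab] unfolding povmE_def Bpp_def pab by simp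
qed

end


context wh begin

lemma tr_rhoE: assumes rho: "rho \<in> carrier_mat d d" and a: "a < d"
  shows "mtrace (rho * povmE d (a,b)) = cE * (mtrace rho + (\<Sum>i<d. rho $$ (i, sg a i) * w (int b * (int (sg a i) - int i))))"
proof -
  have "mtrace (rho * povmE d (a,b)) = (\<Sum>i<d. \<Sum>k<d. rho $$ (i,k) * povmE d (a,b) $$ (k,i))"
  proof -
    have dr: "dim_row rho = d" using rho by auto
    show ?thesis unfolding mtrace_def index_mult_mat(2) dr
      by (intro sum.cong refl, rule mult_entry[OF rho povmE_carrier]) auto
  qed
  also have "\<dots> = (\<Sum>i<d. cE * (rho $$ (i,i) + (\<Sum>k<d. rho $$ (i,k) * Vf a b k i)))"
  proof (intro sum.cong refl)
    fix i assume "i \<in> {..<d}"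
    then have i: "i < d" by simp
    have "(\<Sum>k<d. rho $$ (i,k) * povmE d (a,b) $$ (k,i)) = (\<Sum>k<d. cE * ((if k = i then rho $$ (i,k) else 0) + rho $$ (i,k) * Vf a b k i))"
      using a i by (intro sum.cong refl) (simp add: povmE_entry algebra_simps)
    also have "\<dots> = cE * (rho $$ (i,i) + (\<Sum>k<d. rho $$ (i,k) * Vf a b k i))"
      using i by (simp add: sum_distrib_left[symmetric] sum.distrib)
    finally show "(\<Sum>k<d. rho $$ (i,k) * povmE d (a,b) $$ (k,i)) = cE * (rho $$ (i,i) + (\<Sum>k<d. rho $$ (i,k) * Vf a b k i))" .
  qed
  also have "\<dots> = cE * (mtrace rho + (\<Sum>i<d. \<Sum>k<d. rho $$ (i,k) * Vf a b k i))"
    unfolding mtrace_def using rho by (simp add: sum_distrib_left[symmetric] sum.distrib)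
  also have "(\<Sum>i<d. \<Sum>k<d. rho $$ (i,k) * Vf a b k i) = (\<Sum>i<d. rho $$ (i, sg a i) * w (int b * (int (sg a i) - int i)))"
    by (intro sum.cong refl) (simp add: Vf_col)
  finally show ?thesis .
qed

lemma cE_nz: "cE \<noteq> 0" unfolding cE_def using dpos_c by simp

lemma fourier_zero:
  assumes G: "\<And>b. b < d \<Longrightarrow> (\<Sum>i<d. A i * w (int b * (int (sg a i) - int i))) = 0"
    and i0: "i0 < d"
  shows "A i0 = 0"
proof -
  have "0 = (\<Sum>b<d. w (int b * (int i0 - int (sg a i0))) * (\<Sum>i<d. A i * w (int b * (int (sg a i) - int i))))"
    using G by simp
  also have "\<dots> = (\<Sum>b<d. \<Sum>i<d. A i * (w (int b * (int i0 - int (sg a i0))) * w (int b * (int (sg a i) - int i))))"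
    by (intro sum.cong refl) (simp add: sum_distrib_left mult.left_commute)
  also have "\<dots> = (\<Sum>i<d. \<Sum>b<d. A i * w ((2 * (int i0 - int i)) * int b))"
  proof -
    have "w (int b * (int i0 - int (sg a i0))) * w (int b * (int (sg a i) - int i)) = w ((2 * (int i0 - int i)) * int b)"
      if i: "i < d" for b i
    proof -
      have e1: "w (int b * (int i0 - int (sg a i0))) = w (2 * int b * int i0 - 2 * int b * int a)" by (rule w_sg[OF i0])
      have "w (int b * (int (sg a i) - int i)) = w ((- int b) * (int i - int (sg a i)))" by (simp add: algebra_simps)
      also have "\<dots> = w (2 * (- int b) * int i - 2 * (- int b) * int a)" by (rule w_sg[OF i])
      finally have e2: "w (int b * (int (sg a i) - int i)) = w (2 * (- int b) * int i - 2 * (- int b) * int a)" .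
      have "w (2 * int b * int i0 - 2 * int b * int a) * w (2 * (- int b) * int i - 2 * (- int b) * int a)
          = w ((2 * int b * int i0 - 2 * int b * int a) + (2 * (- int b) * int i - 2 * (- int b) * int a))"
        by (simp only: w_add)
      also have "(2 * int b * int i0 - 2 * int b * int a) + (2 * (- int b) * int i - 2 * (- int b) * int a) = (2 * (int i0 - int i)) * int b"
        by (simp add: algebra_simps)
      finally show ?thesis unfolding e1 e2 .
    qed
    then show ?thesis by (subst sum.swap) (intro sum.cong refl, simp)
  qed
  also have "\<dots> = (\<Sum>i<d. A i * (if i = i0 then of_nat d else 0))"
  proof (intro sum.cong refl)
    fix i assume "i \<in> {..<d}"
    then have i: "i < d" by simp
    have "int d dvd (2 * (int i0 - int i)) \<longleftrightarrow> i = i0"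
      using dvd2[of "int i0 - int i"] nmod_eq[of i0 i] i i0 by auto
    then show "(\<Sum>b<d. A i * w ((2 * (int i0 - int i)) * int b)) = A i * (if i = i0 then of_nat d else 0)"
      by (simp add: sum_distrib_left[symmetric] w_sum)
  qed
  also have "\<dots> = (\<Sum>i<d. if i = i0 then A i * of_nat d else 0)" by (intro sum.cong refl) simp
  also have "\<dots> = A i0 * of_nat d" using i0 by (simp only: sum.delta finite_lessThan) simp
  finally show ?thesis using d_pos by simp
qed

lemma info_compl: "info_complete d (povmE d) (Zd2 d)"
  unfolding info_complete_def
proof (intro allI impI)
  fix rho sig assume dr: "density d rho" and ds: "density d sig"
    and eq: "\<forall>p\<in>Zd2 d. mtrace (rho * povmE d p) = mtrace (sig * povmE d p)"
  have rho: "rho \<in> carrier_mat d d" and trr: "mtrace rho = 1" using dr unfolding density_def psd_def by auto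
  have sig: "sig \<in> carrier_mat d d" and trs: "mtrace sig = 1" using ds unfolding density_def psd_def by auto
  have G: "(\<Sum>i<d. (rho $$ (i, sg a i) - sig $$ (i, sg a i)) * w (int b * (int (sg a i) - int i))) = 0"
    if a: "a < d" and b: "b < d" for a b
  proof -
    have "mtrace (rho * povmE d (a,b)) = mtrace (sig * povmE d (a,b))" using eq a b by (auto simp: Zd2_def)
    then have "(\<Sum>i<d. rho $$ (i, sg a i) * w (int b * (int (sg a i) - int i))) = (\<Sum>i<d. sig $$ (i, sg a i) * w (int b * (int (sg a i) - int i)))"
      unfolding tr_rhoE[OF rho a] tr_rhoE[OF sig a] trr trs using cE_nz by simp
    then show ?thesis by (simp add: algebra_simps sum_subtractf)
  qed
  show "rho = sig"
  proof (rule eq_matI)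
    fix i j assume "i < dim_row sig" "j < dim_col sig"
    then have i: "i < d" and j: "j < d" using sig by auto
    define h where "h = (d + 1) div 2"
    have h2: "2 * h = d + 1" unfolding h_def using odd_d by (auto elim!: oddE)
    define a where "a = ((i + j) * h) mod d"
    have a: "a < d" unfolding a_def using d_pos by simp
    have "(2 * a) mod d = (2 * ((i + j) * h)) mod d" unfolding a_def by (simp add: mod_mult_right_eq)
    also have "2 * ((i + j) * h) = (i + j) * (2 * h)" by (simp only: mult.commute mult.left_commute)
    also have "\<dots> = (i + j) + d * (i + j)" unfolding h2 by (simp add: algebra_simps)
    also have "\<dots> mod d = (i + j) mod d" by simp
    finally have "(i + j) mod d = (2 * a) mod d" by simp
    then have jsg: "j = sg a i" using cnd_iff[OF i j] by simp
    have "rho $$ (i, sg a i) - sig $$ (i, sg a i) = 0"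
      by (rule fourier_zero[where A = "\<lambda>i. rho $$ (i, sg a i) - sig $$ (i, sg a i)" and a = a, OF G[OF a] i])
    then show "rho $$ (i,j) = sig $$ (i,j)" unfolding jsg by simp
  qed (use rho sig in auto)
qed

end


lemma (in vec_space) lin_indpt_support:
  assumes S: "S \<subseteq> carrier_vec n" "finite S"
    and sup: "\<And>v. v \<in> S \<Longrightarrow> \<exists>i<n. v $ i \<noteq> 0 \<and> (\<forall>u\<in>S. u \<noteq> v \<longrightarrow> u $ i = 0)"
  shows "lin_indpt S"
proof (rule finite_lin_indpt2[OF S(2)])
  show "S \<subseteq> carrier_vec n" using S by simp
  fix a assume lc: "lincomb a S = 0\<^sub>v n"
  show "\<forall>v\<in>S. a v = 0"
  proof
    fix v assume v: "v \<in> S"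
    from sup[OF v] obtain i where i: "i < n" "v $ i \<noteq> 0" and z: "\<forall>u\<in>S. u \<noteq> v \<longrightarrow> u $ i = 0" by auto
    have "lincomb a S $ i = (\<Sum>u\<in>S. a u * u $ i)" using lincomb_index[OF i(1) S(1)] .
    also have "\<dots> = (\<Sum>u\<in>S. if u = v then a u * u $ i else 0)" using z by (intro sum.cong refl) auto
    also have "\<dots> = a v * v $ i" using v S(2) by simp
    finally have "a v * v $ i = 0" using lc i by simp
    then show "a v = 0" using i by simp
  qed
qed

lemma (in vec_space) rank_reps:
  assumes A: "A \<in> carrier_mat n nc" and SA: "S \<subseteq> set (cols A)" and li: "lin_indpt S"
    and rep: "\<And>v. v \<in> set (cols A) \<Longrightarrow> \<exists>u\<in>S. \<exists>c. v = c \<cdot>\<^sub>v u"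
  shows "rank A = card S"
proof (rule rank_card_indpt[OF A])
  have colsC: "set (cols A) \<subseteq> carrier_vec n" using A by (auto simp: cols_def)
  show "maximal S (\<lambda>T. T \<subseteq> set (cols A) \<and> lin_indpt T)"
    unfolding maximal_def
  proof (intro conjI allI impI SA li)
    fix T assume T: "S \<subseteq> T \<and> T \<subseteq> set (cols A) \<and> lin_indpt T"
    show "T = S"
    proof (rule ccontr)
      assume "T \<noteq> S"
      then obtain v where vT: "v \<in> T" and vS: "v \<notin> S" using T by auto
      from rep[of v] vT T obtain u c where uS: "u \<in> S" and vu: "v = c \<cdot>\<^sub>v u" by auto
      have uT: "u \<in> T" using uS T by auto
      have uv: "u \<noteq> v" using uS vS by auto
      have uc: "u \<in> carrier_vec n" "v \<in> carrier_vec n" using uT vT T colsC by auto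
      define f where "f x = (if x = u then c else -1)" for x
      have lc: "lincomb f {u, v} = 0\<^sub>v n"
      proof (rule eq_vecI)
        have sub: "{u, v} \<subseteq> carrier_vec n" using uc by auto
        fix i assume "i < dim_vec (0\<^sub>v n :: 'a vec)"
        then have i: "i < n" by simp
        have "lincomb f {u, v} $ i = f u * u $ i + f v * v $ i"
          using lincomb_index[OF i sub] uv by simp
        also have "\<dots> = 0" using uv uc i unfolding f_def vu by simp
        finally show "lincomb f {u, v} $ i = 0\<^sub>v n $ i" using i by simp
      next
        show "dim_vec (lincomb f {u, v}) = dim_vec (0\<^sub>v n :: 'a vec)"
          using uc by (simp add: lincomb_dim)
      qed
      have "lin_dep T"
        apply (rule lin_dep_crit[where A="{u,v}" and a=f and v=v])
        using uT vT uv lc by (auto simp: f_def)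
      then show False using T by simp
    qed
  qed
qed


context wh begin

definition hh :: nat where "hh = (d + 1) div 2"
lemma hh2: "2 * hh = d + 1" unfolding hh_def using odd_d by (auto elim!: oddE)
lemma hh_le: "hh \<le> d" "1 \<le> hh" using hh2 d3 by auto

definition jk :: "nat \<Rightarrow> nat \<Rightarrow> nat" where "jk a k = (a + k) mod d"
lemma jk_lt: "jk a k < d" unfolding jk_def using d_pos by simp

lemma small_dvd: assumes "int d dvd z" "0 \<le> z" "z < int d" shows "z = 0"
proof -
  obtain q where z: "z = int d * q" using assms(1) by (auto simp: dvd_def)
  have dp: "int d > 0" using d_pos by simp
  have "q = 0"
  proof (rule ccontr)
    assume "q \<noteq> 0"
    then consider "q \<ge> 1" | "q \<le> -1" by linarith
    then show False
    proof cases
      case 1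
      then have "int d * q \<ge> int d * 1" using dp by (intro mult_left_mono) auto
      then show False using assms(3) z by simp
    next
      case 2
      then have "int d * q \<le> int d * (-1)" using dp by (intro mult_left_mono) auto
      then show False using assms(2) z dp by simp
    qed
  qed
  then show ?thesis using z by simp
qed

lemma F1: assumes "k < hh" "k' < hh" "jk a k = jk a k'" shows "k = k'"
proof -
  have "int d dvd (int (a + k) - int (a + k'))" using assms(3) unfolding jk_def by (simp add: nmod_eq)
  then have "int d dvd (int k - int k')" by simp
  moreover have "int d dvd (int k' - int k)" using calculation by (metis dvd_minus_iff minus_diff_eq)
  ultimately show ?thesis using assms(1,2) hh_le
    by (cases "k \<le> k'") (auto dest!: small_dvd)
qed

lemma F2: assumes "k < hh" "k' < hh" "jk a k = sg a (jk a k')" shows "k = 0 \<and> k' = 0"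
proof -
  have "(jk a k' + jk a k) mod d = (2 * a) mod d" using cnd_iff[OF jk_lt[of a k'] jk_lt[of a k], of a] assms(3) by simp
  then have "((a + k') + (a + k)) mod d = (2 * a) mod d" unfolding jk_def by (simp add: mod_add_eq)
  then have "int d dvd (int ((a + k') + (a + k)) - int (2 * a))" by (simp add: nmod_eq)
  then have "int d dvd (int k + int k')" by (simp add: algebra_simps)
  moreover have "int k + int k' < int d" using assms(1,2) hh2 by linarith
  ultimately have "int k + int k' = 0" using small_dvd by simp
  then show ?thesis by simp
qed

lemma F3: assumes j: "j < d" shows "\<exists>k<hh. j = jk a k \<or> j = sg a (jk a k)"
proof -
  define t where "t = (j + d - a mod d) mod d"
  have t: "t < d" unfolding t_def using d_pos by simp
  have jt: "(a + t) mod d = j"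
  proof -
    have "(a + t) mod d = (a + (j + d - a mod d)) mod d" unfolding t_def by (simp add: mod_add_right_eq)
    also have "\<dots> = (a mod d + (j + d - a mod d)) mod d" by (simp add: mod_add_left_eq)
    also have "a mod d + (j + d - a mod d) = j + d * 1"
    proof -
      have "a mod d < d" using d_pos by simp
      then show ?thesis by arith
    qed
    finally show ?thesis using j by simp
  qed
  show ?thesis
  proof (cases "t < hh")
    case True
    then show ?thesis using jt unfolding jk_def by auto
  next
    case False
    define k where "k = d - t"
    have k: "k < hh" unfolding k_def using False hh2 t by linarith
    have "(jk a k + j) mod d = (2 * a) mod d"
    proof -
      have "(jk a k + j) mod d = ((a + k) + (a + t)) mod d" unfolding jk_def jt[symmetric] by (simp add: mod_add_eq)
      also have "(a + k) + (a + t) = 2 * a + d * 1" unfolding k_def using t by simp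
      finally show ?thesis by simp
    qed
    then have "j = sg a (jk a k)" using cnd_iff[OF jk_lt j] by simp
    then show ?thesis using k by auto
  qed
qed

lemma Vf_nz: assumes "i < d" "j < d"
  shows "Vf a b i j = (if i = sg a j then w (int b * (int i - int j)) else 0)"
  unfolding Vf_def using cnd_iff[OF assms(2,1), of a] by (simp add: add.commute)

lemma col_sg: assumes a: "a < d" and u: "u < d"
  shows "col (povmE d (a,b)) (sg a u) = w (int b * (int u - int (sg a u))) \<cdot>\<^sub>v col (povmE d (a,b)) u"
proof (rule eq_vecI)
  fix i assume "i < dim_vec (w (int b * (int u - int (sg a u))) \<cdot>\<^sub>v col (povmE d (a,b)) u)"
  then have i: "i < d" by simp
  have su: "sg a u < d" by (rule sg_lt)
  have ssu: "sg a (sg a u) = u" using u by (rule sg_sg)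
  let ?c = "w (int b * (int u - int (sg a u)))"
  have lhs: "col (povmE d (a,b)) (sg a u) $ i = cE * ((if i = sg a u then 1 else 0) + (if i = u then w (int b * (int i - int (sg a u))) else 0))"
    using i su a by (simp add: povmE_entry Vf_nz ssu)
  have rhs: "(?c \<cdot>\<^sub>v col (povmE d (a,b)) u) $ i = ?c * (cE * ((if i = u then 1 else 0) + (if i = sg a u then w (int b * (int i - int u)) else 0)))"
    using i u a by (simp add: povmE_entry Vf_nz)
  have "col (povmE d (a,b)) (sg a u) $ i = (?c \<cdot>\<^sub>v col (povmE d (a,b)) u) $ i"
  proof (cases "i = u")
    case True
    show ?thesis
    proof (cases "u = sg a u")
      case True
      then show ?thesis unfolding lhs rhs using \<open>i = u\<close> by simp
    next
      case False
      then show ?thesis unfolding lhs rhs using \<open>i = u\<close> by simp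
    qed
  next
    case False
    show ?thesis
    proof (cases "i = sg a u")
      case True
      have "?c * w (int b * (int (sg a u) - int u)) = 1" by (rule w_inv2)
      then show ?thesis unfolding lhs rhs using \<open>i \<noteq> u\<close> True by (simp add: algebra_simps)
    next
      case False
      then show ?thesis unfolding lhs rhs using \<open>i \<noteq> u\<close> by simp
    qed
  qed
  then show "col (povmE d (a,b)) (sg a u) $ i = (?c \<cdot>\<^sub>v col (povmE d (a,b)) u) $ i" .
qed simp


lemma cE_nz': "cE \<noteq> 0" unfolding cE_def using dpos_c by simp

lemma E_diag_nz: assumes a: "a < d" and j: "j < d" shows "povmE d (a,b) $$ (j,j) \<noteq> 0"
proof -
  have "Vf a b j j = 0 \<or> Vf a b j j = 1" unfolding Vf_def by simp
  then have "(1::complex) + Vf a b j j \<noteq> 0" by auto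
  then show ?thesis using a j cE_nz' by (simp add: povmE_entry)
qed

lemma E_off: assumes a: "a < d" and k: "k < hh" and k': "k' < hh" and kk: "k \<noteq> k'"
  shows "povmE d (a,b) $$ (jk a k, jk a k') = 0"
proof -
  have "jk a k \<noteq> jk a k'" using F1[OF k k'] kk by auto
  moreover have "jk a k \<noteq> sg a (jk a k')" using F2[OF k k'] kk by auto
  ultimately show ?thesis using a jk_lt by (simp add: povmE_entry Vf_nz[OF jk_lt jk_lt])
qed

lemma rank_E: assumes a: "a < d" shows "mat_rank d (povmE d (a,b)) = (d + 1) div 2"
proof -
  interpret vs: vec_space "TYPE(complex)" d .
  define E where "E = povmE d (a,b)"
  have Ec: "E \<in> carrier_mat d d" unfolding E_def by simp
  have colsE: "set (cols E) = col E ` {..<d}" using Ec unfolding cols_def by (auto simp: lessThan_atLeast0)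
  define S where "S = (\<lambda>k. col E (jk a k)) ` {..<hh}"
  have SA: "S \<subseteq> set (cols E)" unfolding S_def colsE using jk_lt by auto
  have colC: "col E j \<in> carrier_vec d" for j using Ec by (simp add: carrier_vecI)
  have inj: "inj_on (\<lambda>k. col E (jk a k)) {..<hh}"
  proof (rule inj_onI)
    fix k k' assume k: "k \<in> {..<hh}" and k': "k' \<in> {..<hh}" and eq: "col E (jk a k) = col E (jk a k')"
    show "k = k'"
    proof (rule ccontr)
      assume kk: "k \<noteq> k'"
      have "col E (jk a k) $ jk a k = E $$ (jk a k, jk a k)" using Ec jk_lt by simp
      moreover have "col E (jk a k') $ jk a k = E $$ (jk a k, jk a k')" using Ec jk_lt by simp
      ultimately show False using eq E_diag_nz[OF a jk_lt] E_off[OF a _ _ kk] k k' unfolding E_def by auto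
    qed
  qed
  have li: "vs.lin_indpt S"
  proof (rule vs.lin_indpt_support)
    show "S \<subseteq> carrier_vec d" unfolding S_def using colC by auto
    show "finite S" unfolding S_def by simp
    fix v assume "v \<in> S"
    then obtain k where k: "k < hh" and v: "v = col E (jk a k)" unfolding S_def by auto
    show "\<exists>i<d. v $ i \<noteq> 0 \<and> (\<forall>u\<in>S. u \<noteq> v \<longrightarrow> u $ i = 0)"
    proof (intro exI conjI ballI impI)
      show "jk a k < d" by (rule jk_lt)
      show "v $ jk a k \<noteq> 0" unfolding v using Ec jk_lt E_diag_nz[OF a jk_lt] unfolding E_def by simp
      fix u assume "u \<in> S" "u \<noteq> v"
      then obtain k' where k': "k' < hh" and u: "u = col E (jk a k')" and kk: "k \<noteq> k'" unfolding S_def v by auto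
      show "u $ jk a k = 0" unfolding u using Ec jk_lt E_off[OF a k k' kk] unfolding E_def by simp
    qed
  qed
  have rep: "\<exists>u\<in>S. \<exists>c. v = c \<cdot>\<^sub>v u" if "v \<in> set (cols E)" for v
  proof -
    from that obtain j where j: "j < d" and v: "v = col E j" unfolding colsE by auto
    from F3[OF j, of a] obtain k where k: "k < hh" and jj: "j = jk a k \<or> j = sg a (jk a k)" by auto
    have uS: "col E (jk a k) \<in> S" unfolding S_def using k by auto
    show ?thesis
    proof (cases "j = jk a k")
      case True
      then have "v = 1 \<cdot>\<^sub>v col E (jk a k)" unfolding v by simp
      then show ?thesis using uS by blast
    next
      case False
      then have "j = sg a (jk a k)" using jj by auto
      then have "v = w (int b * (int (jk a k) - int (sg a (jk a k)))) \<cdot>\<^sub>v col E (jk a k)"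
        unfolding v E_def using col_sg[OF a jk_lt] by simp
      then show ?thesis using uS by blast
    qed
  qed
  have "vs.rank E = card S" by (rule vs.rank_reps[OF Ec SA li rep])
  also have "card S = hh" unfolding S_def using inj by (simp add: card_image)
  finally show ?thesis unfolding mat_rank_def E_def hh_def .
qed

end


theorem mainTheorem8:
  fixes d :: nat
  assumes "odd d" and "d \<ge> 3"
  shows "opU d = (complex_of_real (1 / real d)) \<cdot>\<^sub>m (1\<^sub>m d + complex_of_real (sqrt (real d + 1)) \<cdot>\<^sub>m opB d)
         \<and> hermitian (opU d)
         \<and> opU d * opU d = 1\<^sub>m d
         \<and> mtrace (opU d) = 1
         \<and> order 1 (char_poly (opU d)) = (d + 1) div 2
         \<and> order (-1) (char_poly (opU d)) = (d - 1) div 2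
         \<and> (\<forall>r<d. opU d *\<^sub>v unit_vec d r = unit_vec d ((d - r) mod d))
         \<and> eigenvalue (opB d) (- complex_of_real (sqrt (real d + 1)))
         \<and> (\<forall>ev. eigenvalue (opB d) ev \<longrightarrow> ev \<in> \<real> \<and> - sqrt (real d + 1) \<le> Re ev)
         \<and> is_POVM d (povmE d) (Zd2 d)
         \<and> symmetric_POVM d (povmE d) (Zd2 d)
         \<and> info_complete d (povmE d) (Zd2 d)
         \<and> (\<forall>p\<in>Zd2 d. mat_rank d (povmE d p) = (d + 1) div 2)
         \<and> (\<forall>p\<in>Zd2 d.
              let B' = dispD d p * opB d * mat_adjoint (dispD d p) ;
                  B'' = complex_of_real (1 / sqrt (real d + 1)) \<cdot>\<^sub>m B'
              in povmE d p = complex_of_real (1 / (real d)^2) \<cdot>\<^sub>m (1\<^sub>m d + B'')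
                 \<and> hermitian B'' \<and> mtrace B'' = 0
                 \<and> hs_norm d B'' = 1 / sqrt (real d + 1))"
  proof -
  interpret wh d using assms by unfold_locales
  show ?thesis
    using item1 item2 item3 item4 item56 item7 item8 item9 is_povm sym_povm info_compl
      rank_E item14 by (auto simp: Zd2_def)
qed

end
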